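(* Let $k$ be a field and $\mathsf{E}$ a lower finite $k$-linear category. Then the contramodule forgetful functor $\Theta_\mathsf{E}$ from left $\mathcal{C}_\mathsf{E}$-contramodules to left $\mathsf{E}$-modules is an equivalence of categories.
   Context: A small $k$-linear category $\mathsf{E}$ has $k$-vector spaces $\operatorname{Hom}_\mathsf{E}(x,y)$, $k$-bilinear associative composition and identities with $\mathrm{id}_x\ne0$. A left $\mathsf{E}$-module is a $k$-linear functor $\mathsf{E}\to k\text{-Vect}$. Write $x\preceq y$ if there are $n\ge1$ and objects $x=z_0,\dots,z_n=y$ with $\operatorname{Hom}_\mathsf{E}(z_{i-1},z_i)\neq0$ for all $i$. $\mathsf{E}$ is locally finite if all $\operatorname{Hom}_\mathsf{E}(x,y)$ are finite-dimensional and every $\{z:x\preceq z\preceq y\}$ is finite; it is lower finite if it is locally finite and for every object $y$ the set $\{x: x\preceq y\}$ is finite. $\mathcal{C}_\mathsf{E}=\bigoplus_{x,y}\mathcal{C}^{x,y}$, $\mathcal{C}^{x,y}=\operatorname{Hom}_\mathsf{E}(x,y)^*$; counit zero on $\mathcal{C}^{x,y}$ for $x\ne y$, evaluation at $\mathrm{id}_x$ on $\mathcal{C}^{x,x}$; comultiplication $\mathcal{C}^{x,y}\to\bigoplus_z\mathcal{C}^{x,z}\otimes\mathcal{C}^{z,y}$ dual to composition $g\otimes h\mapsto hg$. A left contramodule over a coalgebra $(\mathcal{C},\mu,\epsilon)$ is a space $\mathfrak{P}$ with $\pi:\operatorname{Hom}_k(\mathcal{C},\mathfrak{P})\to\mathfrak{P}$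 such that $\pi(c\mapsto\epsilon(c)p)=p$ and, under $\operatorname{Hom}_k(\mathcal{C},\operatorname{Hom}_k(\mathcal{C},\mathfrak{P}))\cong\operatorname{Hom}_k(\mathcal{C}\otimes\mathcal{C},\mathfrak{P})$, $f\mapsto(c'\otimes c''\mapsto f(c'')(c'))$, $\pi(c\mapsto\pi(f(c)))=\pi(f\circ\mu)$; morphisms commute with $\pi$. Set $\varphi\cdot p=\pi(c\mapsto\varphi(c)p)$ for $\varphi\in\mathcal{C}^*$. With $e_x$ evaluation at $\mathrm{id}_x$ on $\mathcal{C}^{x,x}$ (zero elsewhere) and $\mathrm{ev}_f$, for $f\in\operatorname{Hom}_\mathsf{E}(x,y)$, evaluation at $f$ on $\mathcal{C}^{x,y}$ (zero elsewhere): $\Theta_\mathsf{E}(\mathfrak{P})(x)=e_x\cdot\mathfrak{P}$ (with $\mathfrak{P}\cong\prod_xe_x\cdot\mathfrak{P}$), $f$ acting by $p\mapsto\mathrm{ev}_f\cdot p$; on morphisms it takes restrictions. *)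

theory Defs
  imports Main "HOL.Vector_Spaces" "HOL-Library.Function_Algebras"
begin

definition lin_on :: "('k \<Rightarrow> 'a \<Rightarrow> 'a) \<Rightarrow> ('k \<Rightarrow> 'b \<Rightarrow> 'b) \<Rightarrow> 'a::ab_group_add set
    \<Rightarrow> ('a \<Rightarrow> 'b::ab_group_add) \<Rightarrow> bool" where
  "lin_on s1 s2 A f \<longleftrightarrow>
     (\<forall>u\<in>A. \<forall>v\<in>A. f (u + v) = f u + f v) \<and> (\<forall>a. \<forall>u\<in>A. f (s1 a u) = s2 a (f u))"

text \<open>All hom-spaces are subspaces of one ambient k-vector space of type 'h
  (with scalar multiplication hsc).  cmp x y z g h is the composite h g of
  g in Hom x y and h in Hom y z.\<close>

record ('o, 'h, 'k) klcat =
  Ob  :: "'o set"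
  Hom :: "'o \<Rightarrow> 'o \<Rightarrow> 'h set"
  cmp :: "'o \<Rightarrow> 'o \<Rightarrow> 'o \<Rightarrow> 'h \<Rightarrow> 'h \<Rightarrow> 'h"
  idm :: "'o \<Rightarrow> 'h"
  hsc :: "'k \<Rightarrow> 'h \<Rightarrow> 'h"

definition klinear_cat :: "('o, 'h::ab_group_add, 'k::field) klcat \<Rightarrow> bool" where
  "klinear_cat E \<longleftrightarrow>
     vector_space (hsc E) \<and>
     (\<forall>x\<in>Ob E. \<forall>y\<in>Ob E. module.subspace (hsc E) (Hom E x y)) \<and>
     (\<forall>x\<in>Ob E. idm E x \<in> Hom E x x \<and> idm E x \<noteq> 0) \<and>
     (\<forall>x\<in>Ob E. \<forall>y\<in>Ob E. \<forall>z\<in>Ob E. \<forall>g\<in>Hom E x y. \<forall>h\<in>Hom E y z.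
        cmp E x y z g h \<in> Hom E x z) \<and>
     (\<forall>x\<in>Ob E. \<forall>y\<in>Ob E. \<forall>z\<in>Ob E.
        (\<forall>g\<in>Hom E x y. lin_on (hsc E) (hsc E) (Hom E y z) (cmp E x y z g)) \<and>
        (\<forall>h\<in>Hom E y z. lin_on (hsc E) (hsc E) (Hom E x y) (\<lambda>g. cmp E x y z g h))) \<and>
     (\<forall>x\<in>Ob E. \<forall>y\<in>Ob E. \<forall>z\<in>Ob E. \<forall>w\<in>Ob E. \<forall>g\<in>Hom E x y. \<forall>h\<in>Hom E y z. \<forall>l\<in>Hom E z w.
        cmp E x z w (cmp E x y z g h) l = cmp E x y w g (cmp E y z w h l)) \<and>
     (\<forall>x\<in>Ob E. \<forall>y\<in>Ob E. \<forall>g\<in>Hom E x y.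
        cmp E x x y (idm E x) g = g \<and> cmp E x y y g (idm E y) = g)"

definition hom_rel :: "('o, 'h::zero, 'k) klcat \<Rightarrow> ('o \<times> 'o) set" where
  "hom_rel E = {(a, b). a \<in> Ob E \<and> b \<in> Ob E \<and> Hom E a b \<noteq> {0}}"

definition prec :: "('o, 'h::zero, 'k) klcat \<Rightarrow> 'o \<Rightarrow> 'o \<Rightarrow> bool" where
  "prec E x y \<longleftrightarrow> (x, y) \<in> (hom_rel E)\<^sup>+"

definition locally_finite :: "('o, 'h::ab_group_add, 'k::field) klcat \<Rightarrow> bool" where
  "locally_finite E \<longleftrightarrow>
     (\<forall>x\<in>Ob E. \<forall>y\<in>Ob E. \<exists>B. finite B \<and> B \<subseteq> Hom E x y \<and> module.span (hsc E) B = Hom E x y) \<and>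
     (\<forall>x\<in>Ob E. \<forall>y\<in>Ob E. finite {z. prec E x z \<and> prec E z y})"

definition lower_finite :: "('o, 'h::ab_group_add, 'k::field) klcat \<Rightarrow> bool" where
  "lower_finite E \<longleftrightarrow> locally_finite E \<and> (\<forall>y\<in>Ob E. finite {x. prec E x y})"

text \<open>An element c of C_E is a finitely supported family c x y of linear
  functionals on Hom x y (extended by 0 outside Hom x y).\<close>

definition CE :: "('o, 'h::ab_group_add, 'k::field) klcat \<Rightarrow> ('o \<Rightarrow> 'o \<Rightarrow> 'h \<Rightarrow> 'k) set" where
  "CE E = {c.
     finite {(x, y). x \<in> Ob E \<and> y \<in> Ob E \<and> c x y \<noteq> (\<lambda>_. 0)} \<and>
     (\<forall>x y. x \<notin> Ob E \<or> y \<notin> Ob E \<longrightarrow> c x y = (\<lambda>_. 0)) \<and>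
     (\<forall>x\<in>Ob E. \<forall>y\<in>Ob E. lin_on (hsc E) (*) (Hom E x y) (c x y) \<and>
        (\<forall>v. v \<notin> Hom E x y \<longrightarrow> c x y v = 0))}"

definition cscale :: "'k::field \<Rightarrow> ('o \<Rightarrow> 'o \<Rightarrow> 'h \<Rightarrow> 'k) \<Rightarrow> ('o \<Rightarrow> 'o \<Rightarrow> 'h \<Rightarrow> 'k)" where
  "cscale a c = (\<lambda>x y v. a * c x y v)"

definition csupp :: "('o, 'h, 'k) klcat \<Rightarrow> ('o \<Rightarrow> 'o \<Rightarrow> 'h \<Rightarrow> 'k::zero) \<Rightarrow> ('o \<times> 'o) set" where
  "csupp E c = {(x, y). x \<in> Ob E \<and> y \<in> Ob E \<and> c x y \<noteq> (\<lambda>_. 0)}"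

definition coalg_eps :: "('o, 'h, 'k) klcat \<Rightarrow> ('o \<Rightarrow> 'o \<Rightarrow> 'h \<Rightarrow> 'k::field) \<Rightarrow> 'k" where
  "coalg_eps E c = (\<Sum>x\<in>{x\<in>Ob E. c x x \<noteq> (\<lambda>_. 0)}. c x x (idm E x))"

definition cinj :: "'o \<Rightarrow> 'o \<Rightarrow> ('h \<Rightarrow> 'k::zero) \<Rightarrow> ('o \<Rightarrow> 'o \<Rightarrow> 'h \<Rightarrow> 'k)" where
  "cinj x y \<phi> = (\<lambda>a b. if a = x \<and> b = y then \<phi> else (\<lambda>_. 0))"

definition hbasis :: "('o, 'h::ab_group_add, 'k::field) klcat \<Rightarrow> 'o \<Rightarrow> 'o \<Rightarrow> 'h set" where
  "hbasis E x y = (SOME B. B \<subseteq> Hom E x y \<and> \<not> module.dependent (hsc E) B \<and>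
                          module.span (hsc E) B = Hom E x y)"

definition hdual :: "('o, 'h::ab_group_add, 'k::field) klcat \<Rightarrow> 'o \<Rightarrow> 'o \<Rightarrow> 'h \<Rightarrow> 'h \<Rightarrow> 'k" where
  "hdual E x y b = (\<lambda>v. if v \<in> Hom E x y then module.representation (hsc E) (hbasis E x y) v b else 0)"

definition mid :: "('o, 'h::zero, 'k) klcat \<Rightarrow> 'o \<Rightarrow> 'o \<Rightarrow> 'o set" where
  "mid E x y = {z \<in> Ob E. Hom E x z \<noteq> {0} \<and> Hom E z y \<noteq> {0}}"

text \<open>For F : C \<rightarrow> Hom(C,P), corresponding to f : C \<otimes> C \<rightarrow> P via
  f(c' \<otimes> c'') = F c'' c', this is f \<circ> \<mu> where \<mu> is dual to composition:
  \<mu>(c) = \<Sum>_z \<Sum>_{i,j} c(h_j g_i) g_i^* \<otimes> h_j^*  (g_i basis of Hom(x,z),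
  h_j basis of Hom(z,y)), for c in C^{x,y}; extended linearly over the support.\<close>
definition comult_comp :: "('o, 'h::ab_group_add, 'k::field) klcat \<Rightarrow> ('k \<Rightarrow> 'p \<Rightarrow> 'p)
    \<Rightarrow> (('o \<Rightarrow> 'o \<Rightarrow> 'h \<Rightarrow> 'k) \<Rightarrow> ('o \<Rightarrow> 'o \<Rightarrow> 'h \<Rightarrow> 'k) \<Rightarrow> 'p::ab_group_add)
    \<Rightarrow> ('o \<Rightarrow> 'o \<Rightarrow> 'h \<Rightarrow> 'k) \<Rightarrow> 'p" where
  "comult_comp E sp F c =
     (\<Sum>(x, y)\<in>csupp E c. \<Sum>z\<in>mid E x y. \<Sum>b\<in>hbasis E x z. \<Sum>b'\<in>hbasis E z y.
        sp (c x y (cmp E x z y b b')) (F (cinj z y (hdual E z y b')) (cinj x z (hdual E x z b))))"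

definition extC :: "('o, 'h::ab_group_add, 'k::field) klcat \<Rightarrow> (('o \<Rightarrow> 'o \<Rightarrow> 'h \<Rightarrow> 'k) \<Rightarrow> 'p::zero)
    \<Rightarrow> ('o \<Rightarrow> 'o \<Rightarrow> 'h \<Rightarrow> 'k) \<Rightarrow> 'p" where
  "extC E g = (\<lambda>c. if c \<in> CE E then g c else 0)"

definition fscale :: "('k \<Rightarrow> 'p \<Rightarrow> 'p) \<Rightarrow> 'k \<Rightarrow> ('c \<Rightarrow> 'p) \<Rightarrow> ('c \<Rightarrow> 'p)" where
  "fscale sp a F = (\<lambda>c. sp a (F c))"

definition HomC :: "('o, 'h::ab_group_add, 'k::field) klcat \<Rightarrow> ('k \<Rightarrow> 'p \<Rightarrow> 'p) \<Rightarrow> 'p::ab_group_add set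
    \<Rightarrow> (('o \<Rightarrow> 'o \<Rightarrow> 'h \<Rightarrow> 'k) \<Rightarrow> 'p) set" where
  "HomC E sp P = {F. lin_on cscale sp (CE E) F \<and> F ` CE E \<subseteq> P \<and> (\<forall>c. c \<notin> CE E \<longrightarrow> F c = 0)}"

definition is_contra :: "('o, 'h::ab_group_add, 'k::field) klcat \<Rightarrow> ('k \<Rightarrow> 'p \<Rightarrow> 'p) \<Rightarrow> 'p::ab_group_add set
    \<Rightarrow> ((('o \<Rightarrow> 'o \<Rightarrow> 'h \<Rightarrow> 'k) \<Rightarrow> 'p) \<Rightarrow> 'p) \<Rightarrow> bool" where
  "is_contra E sp P \<pi> \<longleftrightarrow>
     vector_space sp \<and> module.subspace sp P \<and>
     (\<forall>F\<in>HomC E sp P. \<pi> F \<in> P) \<and>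
     lin_on (fscale sp) sp (HomC E sp P) \<pi> \<and>
     (\<forall>p\<in>P. \<pi> (extC E (\<lambda>c. sp (coalg_eps E c) p)) = p) \<and>
     (\<forall>f. (\<forall>c\<in>CE E. f c \<in> HomC E sp P) \<and> lin_on cscale (fscale sp) (CE E) f \<and>
          (\<forall>c. c \<notin> CE E \<longrightarrow> f c = 0) \<longrightarrow>
          \<pi> (extC E (\<lambda>c. \<pi> (f c))) = \<pi> (extC E (comult_comp E sp f)))"

definition contra_hom :: "('o, 'h::ab_group_add, 'k::field) klcat
    \<Rightarrow> ('k \<Rightarrow> 'p \<Rightarrow> 'p) \<Rightarrow> 'p::ab_group_add set \<Rightarrow> ((('o \<Rightarrow> 'o \<Rightarrow> 'h \<Rightarrow> 'k) \<Rightarrow> 'p) \<Rightarrow> 'p)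
    \<Rightarrow> ('k \<Rightarrow> 'q \<Rightarrow> 'q) \<Rightarrow> 'q::ab_group_add set \<Rightarrow> ((('o \<Rightarrow> 'o \<Rightarrow> 'h \<Rightarrow> 'k) \<Rightarrow> 'q) \<Rightarrow> 'q)
    \<Rightarrow> ('p \<Rightarrow> 'q) \<Rightarrow> bool" where
  "contra_hom E sp P \<pi> sq Q \<pi>' g \<longleftrightarrow>
     lin_on sp sq P g \<and> g ` P \<subseteq> Q \<and>
     (\<forall>F\<in>HomC E sp P. g (\<pi> F) = \<pi>' (extC E (g \<circ> F)))"

definition cact :: "('o, 'h::ab_group_add, 'k::field) klcat \<Rightarrow> ('k \<Rightarrow> 'p \<Rightarrow> 'p::ab_group_add)
    \<Rightarrow> ((('o \<Rightarrow> 'o \<Rightarrow> 'h \<Rightarrow> 'k) \<Rightarrow> 'p) \<Rightarrow> 'p) \<Rightarrow> (('o \<Rightarrow> 'o \<Rightarrow> 'h \<Rightarrow> 'k) \<Rightarrow> 'k) \<Rightarrow> 'p \<Rightarrow> 'p" where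
  "cact E sp \<pi> \<phi> p = \<pi> (extC E (\<lambda>c. sp (\<phi> c) p))"

definition e_fun :: "('o, 'h, 'k) klcat \<Rightarrow> 'o \<Rightarrow> ('o \<Rightarrow> 'o \<Rightarrow> 'h \<Rightarrow> 'k) \<Rightarrow> 'k" where
  "e_fun E x = (\<lambda>c. c x x (idm E x))"

definition ev_fun :: "'o \<Rightarrow> 'o \<Rightarrow> 'h \<Rightarrow> ('o \<Rightarrow> 'o \<Rightarrow> 'h \<Rightarrow> 'k) \<Rightarrow> 'k" where
  "ev_fun x y f = (\<lambda>c. c x y f)"

definition Theta_obj :: "('o, 'h::ab_group_add, 'k::field) klcat \<Rightarrow> ('k \<Rightarrow> 'p \<Rightarrow> 'p::ab_group_add)
    \<Rightarrow> 'p set \<Rightarrow> ((('o \<Rightarrow> 'o \<Rightarrow> 'h \<Rightarrow> 'k) \<Rightarrow> 'p) \<Rightarrow> 'p) \<Rightarrow> 'o \<Rightarrow> 'p set" where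
  "Theta_obj E sp P \<pi> x = (\<lambda>p. cact E sp \<pi> (e_fun E x) p) ` P"

definition Theta_act :: "('o, 'h::ab_group_add, 'k::field) klcat \<Rightarrow> ('k \<Rightarrow> 'p \<Rightarrow> 'p::ab_group_add)
    \<Rightarrow> ((('o \<Rightarrow> 'o \<Rightarrow> 'h \<Rightarrow> 'k) \<Rightarrow> 'p) \<Rightarrow> 'p) \<Rightarrow> 'o \<Rightarrow> 'o \<Rightarrow> 'h \<Rightarrow> 'p \<Rightarrow> 'p" where
  "Theta_act E sp \<pi> x y f p = cact E sp \<pi> (ev_fun x y f) p"

definition is_Emod :: "('o, 'h::ab_group_add, 'k::field) klcat \<Rightarrow> ('k \<Rightarrow> 'm \<Rightarrow> 'm)
    \<Rightarrow> ('o \<Rightarrow> 'm::ab_group_add set) \<Rightarrow> ('o \<Rightarrow> 'o \<Rightarrow> 'h \<Rightarrow> 'm \<Rightarrow> 'm) \<Rightarrow> bool" where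
  "is_Emod E sm M \<rho> \<longleftrightarrow>
     vector_space sm \<and>
     (\<forall>x\<in>Ob E. module.subspace sm (M x)) \<and>
     (\<forall>x\<in>Ob E. \<forall>y\<in>Ob E. \<forall>f\<in>Hom E x y. lin_on sm sm (M x) (\<rho> x y f) \<and> \<rho> x y f ` M x \<subseteq> M y) \<and>
     (\<forall>x\<in>Ob E. \<forall>y\<in>Ob E. \<forall>v\<in>M x. lin_on (hsc E) sm (Hom E x y) (\<lambda>f. \<rho> x y f v)) \<and>
     (\<forall>x\<in>Ob E. \<forall>v\<in>M x. \<rho> x x (idm E x) v = v) \<and>
     (\<forall>x\<in>Ob E. \<forall>y\<in>Ob E. \<forall>z\<in>Ob E. \<forall>g\<in>Hom E x y. \<forall>h\<in>Hom E y z. \<forall>v\<in>M x.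
        \<rho> x z (cmp E x y z g h) v = \<rho> y z h (\<rho> x y g v))"

definition Emod_hom :: "('o, 'h::ab_group_add, 'k::field) klcat
    \<Rightarrow> ('k \<Rightarrow> 'm \<Rightarrow> 'm) \<Rightarrow> ('o \<Rightarrow> 'm::ab_group_add set) \<Rightarrow> ('o \<Rightarrow> 'o \<Rightarrow> 'h \<Rightarrow> 'm \<Rightarrow> 'm)
    \<Rightarrow> ('k \<Rightarrow> 'n \<Rightarrow> 'n) \<Rightarrow> ('o \<Rightarrow> 'n::ab_group_add set) \<Rightarrow> ('o \<Rightarrow> 'o \<Rightarrow> 'h \<Rightarrow> 'n \<Rightarrow> 'n)
    \<Rightarrow> ('o \<Rightarrow> 'm \<Rightarrow> 'n) \<Rightarrow> bool" where
  "Emod_hom E sm M \<rho> sn N \<rho>' \<eta> \<longleftrightarrow>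
     (\<forall>x\<in>Ob E. lin_on sm sn (M x) (\<eta> x) \<and> \<eta> x ` M x \<subseteq> N x) \<and>
     (\<forall>x\<in>Ob E. \<forall>y\<in>Ob E. \<forall>f\<in>Hom E x y. \<forall>v\<in>M x. \<eta> y (\<rho> x y f v) = \<rho>' x y f (\<eta> x v))"

definition Emod_iso :: "('o, 'h::ab_group_add, 'k::field) klcat
    \<Rightarrow> ('k \<Rightarrow> 'm \<Rightarrow> 'm) \<Rightarrow> ('o \<Rightarrow> 'm::ab_group_add set) \<Rightarrow> ('o \<Rightarrow> 'o \<Rightarrow> 'h \<Rightarrow> 'm \<Rightarrow> 'm)
    \<Rightarrow> ('k \<Rightarrow> 'n \<Rightarrow> 'n) \<Rightarrow> ('o \<Rightarrow> 'n::ab_group_add set) \<Rightarrow> ('o \<Rightarrow> 'o \<Rightarrow> 'h \<Rightarrow> 'n \<Rightarrow> 'n) \<Rightarrow> bool" where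
  "Emod_iso E sm M \<rho> sn N \<rho>' \<longleftrightarrow>
     (\<exists>\<eta> \<eta>'. Emod_hom E sm M \<rho> sn N \<rho>' \<eta> \<and> Emod_hom E sn N \<rho>' sm M \<rho> \<eta>' \<and>
        (\<forall>x\<in>Ob E. (\<forall>v\<in>M x. \<eta>' x (\<eta> x v) = v) \<and> (\<forall>w\<in>N x. \<eta> x (\<eta>' x w) = w)))"

definition pscale :: "('k \<Rightarrow> 'm \<Rightarrow> 'm) \<Rightarrow> 'k \<Rightarrow> ('o \<Rightarrow> 'm) \<Rightarrow> ('o \<Rightarrow> 'm)" where
  "pscale sm a f = (\<lambda>x. sm a (f x))"

end

theory Submission
  imports Defs
begin


lemma lin_on_zero:
  assumes "lin_on s1 s2 A f" "0 \<in> A" shows "f 0 = 0"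
proof -
  have "f (0 + 0) = f 0 + f 0" using assms unfolding lin_on_def by blast
  then show ?thesis by simp
qed

lemma lin_on_add: "lin_on s1 s2 A f \<Longrightarrow> u \<in> A \<Longrightarrow> v \<in> A \<Longrightarrow> f (u + v) = f u + f v"
  unfolding lin_on_def by blast

lemma lin_on_scale: "lin_on s1 s2 A f \<Longrightarrow> u \<in> A \<Longrightarrow> f (s1 a u) = s2 a (f u)"
  unfolding lin_on_def by blast

lemma sum_closed:
  assumes "0 \<in> A" "\<And>u v. u \<in> A \<Longrightarrow> v \<in> A \<Longrightarrow> u + v \<in> A" "\<And>i. i \<in> I \<Longrightarrow> v i \<in> A"
  shows "sum v I \<in> A"
  using assms(3)
proof (induction I rule: infinite_finite_induct)
  case (insert x F) then show ?case using assms(2) by simp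
qed (use assms(1) in simp_all)

lemma lin_on_sum:
  assumes "lin_on s1 s2 A f" "0 \<in> A" "\<And>u v. u \<in> A \<Longrightarrow> v \<in> A \<Longrightarrow> u + v \<in> A"
    "\<And>i. i \<in> I \<Longrightarrow> v i \<in> A"
  shows "f (sum v I) = (\<Sum>i\<in>I. f (v i))"
proof -
  have z: "f 0 = 0" using lin_on_zero[OF assms(1,2)] .
  show ?thesis using assms(4)
  proof (induction I rule: infinite_finite_induct)
    case (infinite J) then show ?case using z by simp
  next
    case empty then show ?case using z by simp
  next
    case (insert x F)
    have "sum v F \<in> A"
      using sum_closed[of A F v] insert.prems assms(2,3) by blast
    moreover have "v x \<in> A" using insert.prems by simp
    ultimately have "f (v x + sum v F) = f (v x) + f (sum v F)" using lin_on_add[OF assms(1)] by blast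
    then show ?case using insert by simp
  qed
qed

locale lkc =
  fixes E :: "('o, 'h::ab_group_add, 'k::field) klcat"
  assumes kl: "klinear_cat E" and lwf: "lower_finite E"
begin

lemmas klp = kl[unfolded klinear_cat_def]
lemmas kl1 = klp[THEN conjunct1]
lemmas kl2 = klp[THEN conjunct2, THEN conjunct1]
lemmas kl3 = klp[THEN conjunct2, THEN conjunct2, THEN conjunct1]
lemmas kl4 = klp[THEN conjunct2, THEN conjunct2, THEN conjunct2, THEN conjunct1]
lemmas kl5 = klp[THEN conjunct2, THEN conjunct2, THEN conjunct2, THEN conjunct2, THEN conjunct1]
lemmas kl6 = klp[THEN conjunct2, THEN conjunct2, THEN conjunct2, THEN conjunct2, THEN conjunct2, THEN conjunct1]
lemmas kl7 = klp[THEN conjunct2, THEN conjunct2, THEN conjunct2, THEN conjunct2, THEN conjunct2, THEN conjunct2]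

sublocale H: vector_space "hsc E"
  using kl1 by blast

lemma hom_sub: "x \<in> Ob E \<Longrightarrow> y \<in> Ob E \<Longrightarrow> H.subspace (Hom E x y)"
  using kl2 by blast

lemma hom_0: "x \<in> Ob E \<Longrightarrow> y \<in> Ob E \<Longrightarrow> 0 \<in> Hom E x y"
  using hom_sub H.subspace_0 by blast

lemma hom_add: "x \<in> Ob E \<Longrightarrow> y \<in> Ob E \<Longrightarrow> u \<in> Hom E x y \<Longrightarrow> v \<in> Hom E x y \<Longrightarrow> u + v \<in> Hom E x y"
  using hom_sub H.subspace_add by blast

lemma hom_scale: "x \<in> Ob E \<Longrightarrow> y \<in> Ob E \<Longrightarrow> u \<in> Hom E x y \<Longrightarrow> hsc E a u \<in> Hom E x y"
  using hom_sub H.subspace_scale by blast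

lemma id_in: "x \<in> Ob E \<Longrightarrow> idm E x \<in> Hom E x x"
  using kl3 by blast

lemma id_ne: "x \<in> Ob E \<Longrightarrow> idm E x \<noteq> 0"
  using kl3 by blast

lemma cmp_in: "x \<in> Ob E \<Longrightarrow> y \<in> Ob E \<Longrightarrow> z \<in> Ob E \<Longrightarrow> g \<in> Hom E x y \<Longrightarrow> h \<in> Hom E y z
   \<Longrightarrow> cmp E x y z g h \<in> Hom E x z"
  using kl4 by blast

lemma cmp_lin2: "x \<in> Ob E \<Longrightarrow> y \<in> Ob E \<Longrightarrow> z \<in> Ob E \<Longrightarrow> g \<in> Hom E x y
   \<Longrightarrow> lin_on (hsc E) (hsc E) (Hom E y z) (cmp E x y z g)"
  using kl5 by blast

lemma cmp_lin1: "x \<in> Ob E \<Longrightarrow> y \<in> Ob E \<Longrightarrow> z \<in> Ob E \<Longrightarrow> h \<in> Hom E y z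
   \<Longrightarrow> lin_on (hsc E) (hsc E) (Hom E x y) (\<lambda>g. cmp E x y z g h)"
  using kl5 by blast

lemma cmp_assoc: "x \<in> Ob E \<Longrightarrow> y \<in> Ob E \<Longrightarrow> z \<in> Ob E \<Longrightarrow> w \<in> Ob E \<Longrightarrow> g \<in> Hom E x y
  \<Longrightarrow> h \<in> Hom E y z \<Longrightarrow> l \<in> Hom E z w \<Longrightarrow>
   cmp E x z w (cmp E x y z g h) l = cmp E x y w g (cmp E y z w h l)"
  using kl6 by blast

lemma cmp_idl: "x \<in> Ob E \<Longrightarrow> y \<in> Ob E \<Longrightarrow> g \<in> Hom E x y \<Longrightarrow> cmp E x x y (idm E x) g = g"
  using kl7 by blast

lemma cmp_idr: "x \<in> Ob E \<Longrightarrow> y \<in> Ob E \<Longrightarrow> g \<in> Hom E x y \<Longrightarrow> cmp E x y y g (idm E y) = g"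
  using kl7 by blast

lemma cmp_0l: "x \<in> Ob E \<Longrightarrow> y \<in> Ob E \<Longrightarrow> z \<in> Ob E \<Longrightarrow> h \<in> Hom E y z \<Longrightarrow> cmp E x y z 0 h = 0"
  using lin_on_zero[OF cmp_lin1 hom_0] by blast

lemma cmp_0r: "x \<in> Ob E \<Longrightarrow> y \<in> Ob E \<Longrightarrow> z \<in> Ob E \<Longrightarrow> g \<in> Hom E x y \<Longrightarrow> cmp E x y z g 0 = 0"
  using lin_on_zero[OF cmp_lin2 hom_0] by blast

lemma hbasis_ex: assumes "x \<in> Ob E" "y \<in> Ob E"
  shows "\<exists>B. B \<subseteq> Hom E x y \<and> \<not> H.dependent B \<and> H.span B = Hom E x y"
proof -
  obtain B where B: "B \<subseteq> Hom E x y" "H.independent B" "Hom E x y \<subseteq> H.span B"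
    "card B = H.dim (Hom E x y)"
    by (rule H.basis_exists[of "Hom E x y"])
  have "H.span B \<subseteq> Hom E x y"
    by (rule H.span_minimal[OF B(1) hom_sub[OF assms]])
  with B show ?thesis by blast
qed

lemma hb_all: assumes "x \<in> Ob E" "y \<in> Ob E"
  shows "hbasis E x y \<subseteq> Hom E x y \<and> \<not> H.dependent (hbasis E x y) \<and> H.span (hbasis E x y) = Hom E x y"
  unfolding hbasis_def by (rule someI_ex[OF hbasis_ex[OF assms]])

lemma hb: assumes "x \<in> Ob E" "y \<in> Ob E"
  shows "hbasis E x y \<subseteq> Hom E x y" "H.independent (hbasis E x y)" "H.span (hbasis E x y) = Hom E x y"
  using hb_all[OF assms] by simp_all

lemma hb_finite: assumes "x \<in> Ob E" "y \<in> Ob E" shows "finite (hbasis E x y)"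
proof -
  have "\<exists>B. finite B \<and> B \<subseteq> Hom E x y \<and> H.span B = Hom E x y"
    using lwf assms unfolding lower_finite_def locally_finite_def by blast
  then obtain B where B: "finite B" "H.span B = Hom E x y" by blast
  have "hbasis E x y \<subseteq> H.span B" using B(2) hb(1)[OF assms] by simp
  from H.independent_span_bound[OF B(1) hb(2)[OF assms] this] show ?thesis by simp
qed

lemma hb_empty: assumes "x \<in> Ob E" "y \<in> Ob E" "Hom E x y = {0}" shows "hbasis E x y = {}"
proof -
  have "0 \<notin> hbasis E x y" using hb(2)[OF assms(1,2)] H.dependent_zero by blast
  moreover have "hbasis E x y \<subseteq> {0}" using hb(1)[OF assms(1,2)] assms(3) by simp
  ultimately show ?thesis by blast
qed

lemma hdual_out: "v \<notin> Hom E x y \<Longrightarrow> hdual E x y b v = 0"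
  unfolding hdual_def by simp

lemma hdual_lin: assumes "x \<in> Ob E" "y \<in> Ob E"
  shows "lin_on (hsc E) (*) (Hom E x y) (hdual E x y b)"
proof -
  note h = hb[OF assms]
  have sp: "v \<in> H.span (hbasis E x y)" if "v \<in> Hom E x y" for v using h(3) that by simp
  show ?thesis unfolding lin_on_def
  proof (intro conjI ballI allI)
    fix u v assume u: "u \<in> Hom E x y" and v: "v \<in> Hom E x y"
    have "u + v \<in> Hom E x y" using hom_add[OF assms u v] .
    then show "hdual E x y b (u + v) = hdual E x y b u + hdual E x y b v"
      unfolding hdual_def using u v H.representation_add[OF h(2) sp[OF v] sp[OF u]] by simp
  next
    fix a u assume u: "u \<in> Hom E x y"
    have "hsc E a u \<in> Hom E x y" using hom_scale[OF assms u] .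
    then show "hdual E x y b (hsc E a u) = a * hdual E x y b u"
      unfolding hdual_def using u H.representation_scale[OF h(2) sp[OF u]] by simp
  qed
qed

lemma hdual_basis: assumes "x \<in> Ob E" "y \<in> Ob E" "b \<in> hbasis E x y" "b' \<in> hbasis E x y"
  shows "hdual E x y b b' = (if b = b' then 1 else 0)"
proof -
  have "b' \<in> Hom E x y" using hb(1)[OF assms(1,2)] assms(4) by blast
  then have "hdual E x y b b' = H.representation (hbasis E x y) b' b" unfolding hdual_def by simp
  also have "\<dots> = (if b = b' then 1 else 0)"
    using H.representation_basis[OF hb(2)[OF assms(1,2)] assms(4)] by simp
  finally show ?thesis .
qed

lemma hdual_expand: assumes "x \<in> Ob E" "y \<in> Ob E" "v \<in> Hom E x y"
  shows "(\<Sum>b\<in>hbasis E x y. hsc E (hdual E x y b v) b) = v"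
proof -
  have "(\<Sum>b\<in>hbasis E x y. hsc E (hdual E x y b v) b)
     = (\<Sum>b\<in>hbasis E x y. hsc E (H.representation (hbasis E x y) v b) b)"
    unfolding hdual_def using assms(3) by simp
  also have "\<dots> = v"
    by (rule H.sum_representation_eq) (use hb[OF assms(1,2)] assms(3) hb_finite[OF assms(1,2)] in auto)
  finally show ?thesis .
qed

lemma dual_expand: assumes "x \<in> Ob E" "y \<in> Ob E" "v \<in> Hom E x y"
    and l: "lin_on (hsc E) (*) (Hom E x y) l"
  shows "(\<Sum>b\<in>hbasis E x y. hdual E x y b v * l b) = l v"
proof -
  have "l v = l (\<Sum>b\<in>hbasis E x y. hsc E (hdual E x y b v) b)"
    using hdual_expand[OF assms(1-3)] by simp
  also have "\<dots> = (\<Sum>b\<in>hbasis E x y. l (hsc E (hdual E x y b v) b))"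
  proof (rule lin_on_sum[OF l hom_0[OF assms(1,2)] hom_add[OF assms(1,2)]])
    fix b assume "b \<in> hbasis E x y"
    then have "b \<in> Hom E x y" using hb(1)[OF assms(1,2)] by blast
    then show "hsc E (hdual E x y b v) b \<in> Hom E x y" using hom_scale[OF assms(1,2)] by blast
  qed
  also have "\<dots> = (\<Sum>b\<in>hbasis E x y. hdual E x y b v * l b)"
    by (rule sum.cong) (use hb[OF assms(1,2)] lin_on_scale[OF l] in auto)
  finally show ?thesis by simp
qed

end


definition clin :: "('o, 'h::ab_group_add, 'k::field) klcat \<Rightarrow> (('o \<Rightarrow> 'o \<Rightarrow> 'h \<Rightarrow> 'k) \<Rightarrow> 'k) \<Rightarrow> bool" where
  "clin E \<phi> \<longleftrightarrow> lin_on cscale (*) (CE E) \<phi>"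

definition Rk :: "('o, 'h::ab_group_add, 'k::field) klcat \<Rightarrow> ('k \<Rightarrow> 'p \<Rightarrow> 'p::ab_group_add)
    \<Rightarrow> (('o \<Rightarrow> 'o \<Rightarrow> 'h \<Rightarrow> 'k) \<Rightarrow> 'k) \<Rightarrow> 'p \<Rightarrow> ('o \<Rightarrow> 'o \<Rightarrow> 'h \<Rightarrow> 'k) \<Rightarrow> 'p" where
  "Rk E sp \<phi> p = extC E (\<lambda>c. sp (\<phi> c) p)"

lemma cact_Rk: "cact E sp \<pi> \<phi> p = \<pi> (Rk E sp \<phi> p)"
  unfolding cact_def Rk_def ..

lemma clin_add: "clin E \<phi> \<Longrightarrow> clin E \<psi> \<Longrightarrow> clin E (\<lambda>c. \<phi> c + \<psi> c)"
  unfolding clin_def lin_on_def by (simp add: algebra_simps)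

lemma clin_scale: "clin E \<phi> \<Longrightarrow> clin E (\<lambda>c. a * \<phi> c)"
  unfolding clin_def lin_on_def by (simp add: algebra_simps)

lemma clin_zero: "clin E (\<lambda>c. 0)"
  unfolding clin_def lin_on_def by simp

lemma clin_sum: "(\<And>i. i \<in> I \<Longrightarrow> clin E (\<phi> i)) \<Longrightarrow> clin E (\<lambda>c. \<Sum>i\<in>I. \<phi> i c)"
proof (induction I rule: infinite_finite_induct)
  case (insert x F)
  then show ?case using clin_add[of E "\<phi> x" "\<lambda>c. \<Sum>i\<in>F. \<phi> i c"] by simp
qed (simp_all add: clin_zero)

lemma clin_ev: "clin E (ev_fun x y f)"
  unfolding clin_def lin_on_def ev_fun_def cscale_def by simp

lemma clin_e: "clin E (e_fun E x)"
  unfolding clin_def lin_on_def e_fun_def cscale_def by simp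

lemma e_is_ev: "e_fun E x = ev_fun x x (idm E x)"
  unfolding e_fun_def ev_fun_def ..

lemma lin_on_0fun: "lin_on s (*) A (\<lambda>_. 0::'k::field)"
  unfolding lin_on_def by simp

context lkc begin

lemma CE_D:
  assumes "c \<in> CE E"
  shows "finite (csupp E c)"
    "x \<notin> Ob E \<or> y \<notin> Ob E \<Longrightarrow> c x y = (\<lambda>_. 0)"
    "x \<in> Ob E \<Longrightarrow> y \<in> Ob E \<Longrightarrow> lin_on (hsc E) (*) (Hom E x y) (c x y)"
    "x \<in> Ob E \<Longrightarrow> y \<in> Ob E \<Longrightarrow> v \<notin> Hom E x y \<Longrightarrow> c x y v = 0"
  using assms unfolding CE_def csupp_def by auto

lemma CE_out: "c \<in> CE E \<Longrightarrow> v \<notin> Hom E x y \<Longrightarrow> c x y v = 0"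
  using CE_D(2,4) by (metis)

lemma CE_hom0: "c \<in> CE E \<Longrightarrow> c x y 0 = 0"
proof -
  assume c: "c \<in> CE E"
  show ?thesis
  proof (cases "x \<in> Ob E \<and> y \<in> Ob E")
    case True
    then show ?thesis using lin_on_zero[OF CE_D(3)[OF c] hom_0] by blast
  next
    case False
    then show ?thesis using CE_D(2)[OF c] by metis
  qed
qed

lemma CE_I:
  assumes "finite (csupp E c)"
    "\<And>x y. x \<notin> Ob E \<or> y \<notin> Ob E \<Longrightarrow> c x y = (\<lambda>_. 0)"
    "\<And>x y. x \<in> Ob E \<Longrightarrow> y \<in> Ob E \<Longrightarrow> lin_on (hsc E) (*) (Hom E x y) (c x y)"
    "\<And>x y v. x \<in> Ob E \<Longrightarrow> y \<in> Ob E \<Longrightarrow> v \<notin> Hom E x y \<Longrightarrow> c x y v = 0"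
  shows "c \<in> CE E"
  using assms unfolding CE_def csupp_def by auto

lemma CE_add: assumes "u \<in> CE E" "v \<in> CE E" shows "u + v \<in> CE E"
proof (rule CE_I)
  have "csupp E (u + v) \<subseteq> csupp E u \<union> csupp E v"
    unfolding csupp_def by (auto simp: plus_fun_def)
  then show "finite (csupp E (u + v))" using CE_D(1)[OF assms(1)] CE_D(1)[OF assms(2)]
    by (meson finite_UnI finite_subset)
  show "(u + v) x y = (\<lambda>_. 0)" if "x \<notin> Ob E \<or> y \<notin> Ob E" for x y
    using CE_D(2)[OF assms(1) that] CE_D(2)[OF assms(2) that] by (simp add: plus_fun_def)
  show "lin_on (hsc E) (*) (Hom E x y) ((u + v) x y)" if "x \<in> Ob E" "y \<in> Ob E" for x y
    using CE_D(3)[OF assms(1) that] CE_D(3)[OF assms(2) that]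
    unfolding lin_on_def by (simp add: plus_fun_def algebra_simps)
  show "(u + v) x y w = 0" if "x \<in> Ob E" "y \<in> Ob E" "w \<notin> Hom E x y" for x y w
    using CE_D(4)[OF assms(1) that] CE_D(4)[OF assms(2) that] by (simp add: plus_fun_def)
qed

lemma CE_scale: assumes "u \<in> CE E" shows "cscale a u \<in> CE E"
proof (rule CE_I)
  have "csupp E (cscale a u) \<subseteq> csupp E u"
    unfolding csupp_def cscale_def by auto
  then show "finite (csupp E (cscale a u))" using CE_D(1)[OF assms(1)]
    by (meson finite_subset)
  show "(cscale a u) x y = (\<lambda>_. 0)" if "x \<notin> Ob E \<or> y \<notin> Ob E" for x y
    using CE_D(2)[OF assms(1) that] by (simp add: cscale_def)
  show "lin_on (hsc E) (*) (Hom E x y) ((cscale a u) x y)" if "x \<in> Ob E" "y \<in> Ob E" for x y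
    using CE_D(3)[OF assms(1) that]
    unfolding lin_on_def by (simp add: cscale_def algebra_simps)
  show "(cscale a u) x y w = 0" if "x \<in> Ob E" "y \<in> Ob E" "w \<notin> Hom E x y" for x y w
    using CE_D(4)[OF assms(1) that] by (simp add: cscale_def)
qed

lemma CE_zero: "(\<lambda>_ _ _. 0) \<in> CE E"
  by (rule CE_I) (auto simp: csupp_def lin_on_0fun)

lemma cinj_CE:
  assumes "x \<in> Ob E" "y \<in> Ob E" "lin_on (hsc E) (*) (Hom E x y) \<phi>" "\<And>v. v \<notin> Hom E x y \<Longrightarrow> \<phi> v = 0"
  shows "cinj x y \<phi> \<in> CE E"
proof (rule CE_I)
  have "csupp E (cinj x y \<phi>) \<subseteq> {(x, y)}" unfolding csupp_def cinj_def by auto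
  then show "finite (csupp E (cinj x y \<phi>))" by (meson finite.emptyI finite.insertI finite_subset)
qed (use assms in \<open>auto simp: cinj_def lin_on_0fun\<close>)

lemma hdual_CE: "x \<in> Ob E \<Longrightarrow> y \<in> Ob E \<Longrightarrow> cinj x y (hdual E x y b) \<in> CE E"
  by (rule cinj_CE) (auto intro: hdual_lin hdual_out)

lemma cinj_app: "cinj x y \<phi> a b = (if a = x \<and> b = y then \<phi> else (\<lambda>_. 0))"
  unfolding cinj_def ..

end

locale contra = lkc E for E :: "('o, 'h::ab_group_add, 'k::field) klcat" +
  fixes sp :: "'k \<Rightarrow> 'p::ab_group_add \<Rightarrow> 'p" and P :: "'p set" and \<pi> :: "(('o \<Rightarrow> 'o \<Rightarrow> 'h \<Rightarrow> 'k) \<Rightarrow> 'p) \<Rightarrow> 'p"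
  assumes ic: "is_contra E sp P \<pi>"
begin

lemmas icp = ic[unfolded is_contra_def]
lemmas ic1 = icp[THEN conjunct1]
lemmas ic2 = icp[THEN conjunct2, THEN conjunct1]
lemmas ic3 = icp[THEN conjunct2, THEN conjunct2, THEN conjunct1]
lemmas ic4 = icp[THEN conjunct2, THEN conjunct2, THEN conjunct2, THEN conjunct1]
lemmas ic5 = icp[THEN conjunct2, THEN conjunct2, THEN conjunct2, THEN conjunct2, THEN conjunct1]
lemmas ic6 = icp[THEN conjunct2, THEN conjunct2, THEN conjunct2, THEN conjunct2, THEN conjunct2]

sublocale V: vector_space sp by (rule ic1)

lemma P_sub: "V.subspace P" by (rule ic2)
lemma P_0: "0 \<in> P" using V.subspace_0[OF P_sub] .
lemma P_add: "p \<in> P \<Longrightarrow> q \<in> P \<Longrightarrow> p + q \<in> P" using V.subspace_add[OF P_sub] .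
lemma P_scale: "p \<in> P \<Longrightarrow> sp a p \<in> P" using V.subspace_scale[OF P_sub] .
lemma P_diff: "p \<in> P \<Longrightarrow> q \<in> P \<Longrightarrow> p - q \<in> P" using V.subspace_diff[OF P_sub] .
lemma P_sum: "(\<And>i. i \<in> I \<Longrightarrow> f i \<in> P) \<Longrightarrow> sum f I \<in> P" using V.subspace_sum[OF P_sub] .

lemma pi_in: "F \<in> HomC E sp P \<Longrightarrow> \<pi> F \<in> P" using ic3 by blast
lemma pi_add: "F \<in> HomC E sp P \<Longrightarrow> G \<in> HomC E sp P \<Longrightarrow> \<pi> (F + G) = \<pi> F + \<pi> G"
  using lin_on_add[OF ic4] .
lemma pi_scale: "F \<in> HomC E sp P \<Longrightarrow> \<pi> (fscale sp a F) = sp a (\<pi> F)"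
  using lin_on_scale[OF ic4] .
lemma counit: "p \<in> P \<Longrightarrow> \<pi> (extC E (\<lambda>c. sp (coalg_eps E c) p)) = p"
  using ic5 by blast
lemma cassoc: "(\<forall>c\<in>CE E. f c \<in> HomC E sp P) \<Longrightarrow> lin_on cscale (fscale sp) (CE E) f \<Longrightarrow>
          (\<forall>c. c \<notin> CE E \<longrightarrow> f c = 0) \<Longrightarrow>
          \<pi> (extC E (\<lambda>c. \<pi> (f c))) = \<pi> (extC E (comult_comp E sp f))"
  using ic6 by blast

lemma HomC_I: "lin_on cscale sp (CE E) F \<Longrightarrow> (\<And>c. c \<in> CE E \<Longrightarrow> F c \<in> P) \<Longrightarrow> (\<And>c. c \<notin> CE E \<Longrightarrow> F c = 0)
  \<Longrightarrow> F \<in> HomC E sp P"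
  unfolding HomC_def by blast

lemma HomC_D: assumes "F \<in> HomC E sp P"
  shows "lin_on cscale sp (CE E) F" "c \<in> CE E \<Longrightarrow> F c \<in> P" "c \<notin> CE E \<Longrightarrow> F c = 0"
  using assms unfolding HomC_def by blast+

lemma HomC_zero: "(\<lambda>_. 0) \<in> HomC E sp P"
  by (rule HomC_I) (auto simp: lin_on_def P_0)

lemma HomC_add: assumes "F \<in> HomC E sp P" "G \<in> HomC E sp P" shows "F + G \<in> HomC E sp P"
proof (rule HomC_I)
  show "lin_on cscale sp (CE E) (F + G)"
    using HomC_D(1)[OF assms(1)] HomC_D(1)[OF assms(2)]
    unfolding lin_on_def by (simp add: algebra_simps V.scale_right_distrib)
qed (use HomC_D[OF assms(1)] HomC_D[OF assms(2)] P_add in auto)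

lemma HomC_scale: assumes "F \<in> HomC E sp P" shows "fscale sp a F \<in> HomC E sp P"
proof (rule HomC_I)
  show "lin_on cscale sp (CE E) (fscale sp a F)"
    using HomC_D(1)[OF assms(1)]
    unfolding lin_on_def fscale_def by (simp add: algebra_simps V.scale_right_distrib mult.commute)
qed (use HomC_D[OF assms(1)] P_scale in \<open>auto simp: fscale_def\<close>)

lemma HomC_sum: "(\<And>i. i \<in> I \<Longrightarrow> F i \<in> HomC E sp P) \<Longrightarrow> (\<lambda>c. \<Sum>i\<in>I. F i c) \<in> HomC E sp P"
proof (induction I rule: infinite_finite_induct)
  case (insert x I)
  have "(\<lambda>c. \<Sum>i\<in>insert x I. F i c) = F x + (\<lambda>c. \<Sum>i\<in>I. F i c)"
    using insert.hyps by (auto simp: plus_fun_def)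
  then show ?case using HomC_add insert by auto
qed (simp_all add: HomC_zero)

lemma pi_zero: "\<pi> (\<lambda>_. 0) = 0"
  using lin_on_zero[OF ic4] HomC_zero by (simp add: zero_fun_def)

lemma pi_sum: "(\<And>i. i \<in> I \<Longrightarrow> F i \<in> HomC E sp P) \<Longrightarrow> \<pi> (\<lambda>c. \<Sum>i\<in>I. F i c) = (\<Sum>i\<in>I. \<pi> (F i))"
proof (induction I rule: infinite_finite_induct)
  case (infinite A) then show ?case using pi_zero by simp
next
  case empty then show ?case using pi_zero by simp
next
  case (insert x I)
  have "(\<lambda>c. \<Sum>i\<in>insert x I. F i c) = F x + (\<lambda>c. \<Sum>i\<in>I. F i c)"
    using insert.hyps by (auto simp: plus_fun_def)
  then show ?case using pi_add[of "F x" "\<lambda>c. \<Sum>i\<in>I. F i c"] HomC_sum[of I F] insert by auto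
qed

lemma extC_cong: "(\<And>c. c \<in> CE E \<Longrightarrow> f c = g c) \<Longrightarrow> extC E f = extC E g"
  unfolding extC_def by auto

lemma Rk_app: "c \<in> CE E \<Longrightarrow> Rk E sp \<phi> p c = sp (\<phi> c) p"
  unfolding Rk_def extC_def by simp

lemma Rk_out: "c \<notin> CE E \<Longrightarrow> Rk E sp \<phi> p c = 0"
  unfolding Rk_def extC_def by simp

lemma Rk_HomC: assumes "clin E \<phi>" "p \<in> P" shows "Rk E sp \<phi> p \<in> HomC E sp P"
proof (rule HomC_I)
  note l = assms(1)[unfolded clin_def]
  show "lin_on cscale sp (CE E) (Rk E sp \<phi> p)"
    unfolding lin_on_def
  proof (intro conjI ballI allI)
    fix u v assume u: "u \<in> CE E" and v: "v \<in> CE E"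
    have "Rk E sp \<phi> p (u + v) = sp (\<phi> (u + v)) p" using Rk_app CE_add[OF u v] by blast
    also have "\<dots> = sp (\<phi> u + \<phi> v) p" using lin_on_add[OF l u v] by simp
    also have "\<dots> = Rk E sp \<phi> p u + Rk E sp \<phi> p v"
      using Rk_app[OF u] Rk_app[OF v] V.scale_left_distrib by simp
    finally show "Rk E sp \<phi> p (u + v) = Rk E sp \<phi> p u + Rk E sp \<phi> p v" .
  next
    fix a u assume u: "u \<in> CE E"
    have "Rk E sp \<phi> p (cscale a u) = sp (\<phi> (cscale a u)) p" using Rk_app CE_scale[OF u] by blast
    also have "\<dots> = sp (a * \<phi> u) p" using lin_on_scale[OF l u] by simp
    also have "\<dots> = sp a (Rk E sp \<phi> p u)" using Rk_app[OF u] by simp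
    finally show "Rk E sp \<phi> p (cscale a u) = sp a (Rk E sp \<phi> p u)" .
  qed
qed (simp_all add: Rk_app Rk_out assms(2) P_scale)

lemma cact_in: "clin E \<phi> \<Longrightarrow> p \<in> P \<Longrightarrow> cact E sp \<pi> \<phi> p \<in> P"
  unfolding cact_Rk by (rule pi_in[OF Rk_HomC])

lemma cact_cong: "(\<And>c. c \<in> CE E \<Longrightarrow> \<phi> c = \<psi> c) \<Longrightarrow> cact E sp \<pi> \<phi> p = cact E sp \<pi> \<psi> p"
proof -
  assume a: "\<And>c. c \<in> CE E \<Longrightarrow> \<phi> c = \<psi> c"
  have "extC E (\<lambda>c. sp (\<phi> c) p) = extC E (\<lambda>c. sp (\<psi> c) p)"
    by (rule extC_cong) (simp add: a)
  then show ?thesis unfolding cact_def by simp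
qed

lemma cact_add_p: assumes "clin E \<phi>" "p \<in> P" "q \<in> P"
  shows "cact E sp \<pi> \<phi> (p + q) = cact E sp \<pi> \<phi> p + cact E sp \<pi> \<phi> q"
proof -
  have "Rk E sp \<phi> (p + q) = Rk E sp \<phi> p + Rk E sp \<phi> q"
    by (auto simp: Rk_def extC_def plus_fun_def V.scale_right_distrib)
  then show ?thesis unfolding cact_Rk using pi_add[OF Rk_HomC[OF assms(1,2)] Rk_HomC[OF assms(1,3)]] by simp
qed

lemma cact_scale_p: assumes "clin E \<phi>" "p \<in> P"
  shows "cact E sp \<pi> \<phi> (sp a p) = sp a (cact E sp \<pi> \<phi> p)"
proof -
  have "Rk E sp \<phi> (sp a p) = fscale sp a (Rk E sp \<phi> p)"
    by (auto simp: Rk_def extC_def fscale_def mult.commute)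
  then show ?thesis unfolding cact_Rk using pi_scale[OF Rk_HomC[OF assms(1,2)]] by simp
qed

lemma cact_add_phi: assumes "clin E \<phi>" "clin E \<psi>" "p \<in> P"
  shows "cact E sp \<pi> (\<lambda>c. \<phi> c + \<psi> c) p = cact E sp \<pi> \<phi> p + cact E sp \<pi> \<psi> p"
proof -
  have "Rk E sp (\<lambda>c. \<phi> c + \<psi> c) p = Rk E sp \<phi> p + Rk E sp \<psi> p"
    by (auto simp: Rk_def extC_def plus_fun_def V.scale_left_distrib)
  then show ?thesis unfolding cact_Rk using pi_add[OF Rk_HomC[OF assms(1) assms(3)] Rk_HomC[OF assms(2) assms(3)]] by simp
qed

lemma cact_scale_phi: assumes "clin E \<phi>" "p \<in> P"
  shows "cact E sp \<pi> (\<lambda>c. a * \<phi> c) p = sp a (cact E sp \<pi> \<phi> p)"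
proof -
  have "Rk E sp (\<lambda>c. a * \<phi> c) p = fscale sp a (Rk E sp \<phi> p)"
    by (auto simp: Rk_def extC_def fscale_def)
  then show ?thesis unfolding cact_Rk using pi_scale[OF Rk_HomC[OF assms(1,2)]] by simp
qed

lemma cact_zero_phi: "cact E sp \<pi> (\<lambda>c. 0) p = 0"
proof -
  have "Rk E sp (\<lambda>c. 0) p = (\<lambda>_. 0)" by (auto simp: Rk_def extC_def)
  then show ?thesis unfolding cact_Rk using pi_zero by simp
qed

lemma cact_sum_phi: assumes "\<And>i. i \<in> I \<Longrightarrow> clin E (\<phi> i)" "p \<in> P"
  shows "cact E sp \<pi> (\<lambda>c. \<Sum>i\<in>I. \<phi> i c) p = (\<Sum>i\<in>I. cact E sp \<pi> (\<phi> i) p)"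
  using assms(1)
proof (induction I rule: infinite_finite_induct)
  case (infinite A) then show ?case using cact_zero_phi by simp
next
  case empty then show ?case using cact_zero_phi by simp
next
  case (insert x I)
  have "cact E sp \<pi> (\<lambda>c. \<Sum>i\<in>insert x I. \<phi> i c) p = cact E sp \<pi> (\<lambda>c. \<phi> x c + (\<Sum>i\<in>I. \<phi> i c)) p"
    using insert.hyps by simp
  also have "\<dots> = cact E sp \<pi> (\<phi> x) p + cact E sp \<pi> (\<lambda>c. \<Sum>i\<in>I. \<phi> i c) p"
    by (rule cact_add_phi) (use insert.prems in \<open>auto intro!: clin_sum assms(2)\<close>)
  also have "cact E sp \<pi> (\<lambda>c. \<Sum>i\<in>I. \<phi> i c) p = (\<Sum>i\<in>I. cact E sp \<pi> (\<phi> i) p)"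
    using insert.IH insert.prems by blast
  finally show ?case using insert.hyps by (simp add: sum.insert)
qed

lemma cact_zero_p: "clin E \<phi> \<Longrightarrow> cact E sp \<pi> \<phi> 0 = 0"
  using cact_add_p[of \<phi> 0 0] P_0 by simp

lemma cact_diff_p: assumes "clin E \<phi>" "p \<in> P" "q \<in> P"
  shows "cact E sp \<pi> \<phi> (p - q) = cact E sp \<pi> \<phi> p - cact E sp \<pi> \<phi> q"
proof -
  have "cact E sp \<pi> \<phi> (p - q) + cact E sp \<pi> \<phi> q = cact E sp \<pi> \<phi> p"
    using cact_add_p[OF assms(1) P_diff[OF assms(2,3)] assms(3)] by simp
  then show ?thesis by (simp add: algebra_simps)
qed

end


lemma comult_eq:
  assumes "\<And>x w. (x, w) \<in> csupp E c \<Longrightarrow>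
     (\<Sum>m\<in>mid E x w. \<Sum>b\<in>hbasis E x m. \<Sum>b'\<in>hbasis E m w.
        sp (c x w (cmp E x m w b b')) (f (cinj m w (hdual E m w b')) (cinj x m (hdual E x m b)))) = H x w"
  shows "comult_comp E sp f c = (\<Sum>(x, w)\<in>csupp E c. H x w)"
  unfolding comult_comp_def
  by (rule sum.cong[OF refl]) (use assms in auto)

context lkc begin

lemma mid_iff: "m \<in> mid E x w \<longleftrightarrow> m \<in> Ob E \<and> Hom E x m \<noteq> {0} \<and> Hom E m w \<noteq> {0}"
  unfolding mid_def by simp

lemma prec_I: "x \<in> Ob E \<Longrightarrow> y \<in> Ob E \<Longrightarrow> Hom E x y \<noteq> {0} \<Longrightarrow> prec E x y"
  unfolding prec_def hom_rel_def by auto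

lemma mid_finite: assumes "x \<in> Ob E" "w \<in> Ob E" shows "finite (mid E x w)"
proof -
  have "finite {z. prec E x z \<and> prec E z w}"
    using lwf assms unfolding lower_finite_def locally_finite_def by blast
  moreover have "mid E x w \<subseteq> {z. prec E x z \<and> prec E z w}"
    using assms prec_I unfolding mid_def by blast
  ultimately show ?thesis by (rule finite_subset[rotated])
qed

lemma csupp_Ob: "(x, w) \<in> csupp E c \<Longrightarrow> x \<in> Ob E \<and> w \<in> Ob E"
  unfolding csupp_def by simp

lemma notin_csupp: "x \<in> Ob E \<Longrightarrow> w \<in> Ob E \<Longrightarrow> (x, w) \<notin> csupp E c \<Longrightarrow> c x w v = 0"
  unfolding csupp_def by (simp add: fun_eq_iff)

lemma hom_ne0: "Hom E x y \<noteq> {0} \<Longrightarrow> x \<in> Ob E \<Longrightarrow> y \<in> Ob E \<Longrightarrow> h \<in> Hom E x y \<Longrightarrow> True" by simp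

lemma hom_is0: "x \<in> Ob E \<Longrightarrow> y \<in> Ob E \<Longrightarrow> Hom E x y = {0} \<Longrightarrow> h \<in> Hom E x y \<Longrightarrow> h = 0"
  by blast

lemma lower_set_finite: "y \<in> Ob E \<Longrightarrow> finite {a \<in> Ob E. Hom E a y \<noteq> {0}}"
proof -
  assume y: "y \<in> Ob E"
  have "finite {x. prec E x y}" using lwf y unfolding lower_finite_def by blast
  moreover have "{a \<in> Ob E. Hom E a y \<noteq> {0}} \<subseteq> {x. prec E x y}" using prec_I y by blast
  ultimately show ?thesis by (rule finite_subset[rotated])
qed

end

context contra begin

definition Gy :: "'o \<Rightarrow> 'o \<Rightarrow> 'h \<Rightarrow> (('o \<Rightarrow> 'o \<Rightarrow> 'h \<Rightarrow> 'k) \<Rightarrow> 'p) \<Rightarrow> ('o \<Rightarrow> 'o \<Rightarrow> 'h \<Rightarrow> 'k) \<Rightarrow> 'o \<Rightarrow> 'p" where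
  "Gy y z h F c a = (\<Sum>\<beta>\<in>hbasis E a y. sp (c a z (cmp E a y z \<beta> h)) (F (cinj a y (hdual E a y \<beta>))))"

lemma Gy_zero:
  assumes c: "c \<in> CE E" and a: "a \<in> Ob E" and yz: "y \<in> Ob E" "z \<in> Ob E" and h: "h \<in> Hom E y z"
    and cases: "(a, z) \<notin> csupp E c \<or> Hom E a y = {0} \<or> Hom E y z = {0}"
  shows "Gy y z h F c a = 0"
  using cases
proof (elim disjE)
  assume "(a, z) \<notin> csupp E c"
  then have "c a z v = 0" for v using notin_csupp[OF a yz(2)] by blast
  then show ?thesis unfolding Gy_def by simp
next
  assume "Hom E a y = {0}"
  then show ?thesis unfolding Gy_def using hb_empty[OF a yz(1)] by simp
next
  assume "Hom E y z = {0}"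
  then have "h = 0" using h by blast
  then have "c a z (cmp E a y z \<beta> h) = 0" if "\<beta> \<in> hbasis E a y" for \<beta>
    using cmp_0r[OF a yz] hb(1)[OF a yz(1)] that CE_hom0[OF c] by auto
  then show ?thesis unfolding Gy_def by simp
qed

lemma GL:
  assumes y: "y \<in> Ob E" and z: "z \<in> Ob E" and h: "h \<in> Hom E y z" and F: "F \<in> HomC E sp P"
    and T: "finite T" "T \<subseteq> Ob E" "\<And>a. a \<in> Ob E \<Longrightarrow> Hom E a y \<noteq> {0} \<Longrightarrow> a \<in> T"
  shows "cact E sp \<pi> (ev_fun y z h) (\<pi> F) = \<pi> (extC E (\<lambda>c. \<Sum>a\<in>T. Gy y z h F c a))"
proof -
  define f where "f = (\<lambda>c''. if c'' \<in> CE E then fscale sp (c'' y z h) F else (\<lambda>_. 0))"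
  have f_in: "\<forall>c\<in>CE E. f c \<in> HomC E sp P" unfolding f_def using HomC_scale[OF F] by simp
  have f_lin: "lin_on cscale (fscale sp) (CE E) f"
    unfolding lin_on_def
  proof (intro conjI ballI allI)
    fix u v assume u: "u \<in> CE E" and v: "v \<in> CE E"
    show "f (u + v) = f u + f v"
      using u v CE_add[OF u v] unfolding f_def
      by (auto simp: fun_eq_iff fscale_def V.scale_left_distrib)
  next
    fix a u assume u: "u \<in> CE E"
    show "f (cscale a u) = fscale sp a (f u)"
      using u CE_scale[OF u] unfolding f_def
      by (auto simp: fun_eq_iff fscale_def cscale_def)
  qed
  have f_out: "\<forall>c. c \<notin> CE E \<longrightarrow> f c = 0" unfolding f_def by (simp add: zero_fun_def)
  note CA = cassoc[OF f_in f_lin f_out]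
  have lhs: "extC E (\<lambda>c. \<pi> (f c)) = Rk E sp (ev_fun y z h) (\<pi> F)"
    unfolding Rk_def
    by (rule extC_cong) (simp add: f_def pi_scale[OF F] ev_fun_def)
  have rhs: "extC E (comult_comp E sp f) = extC E (\<lambda>c. \<Sum>a\<in>T. Gy y z h F c a)"
  proof (rule extC_cong)
    fix c assume c: "c \<in> CE E"
    have inner: "(\<Sum>m\<in>mid E x w. \<Sum>b\<in>hbasis E x m. \<Sum>b'\<in>hbasis E m w.
        sp (c x w (cmp E x m w b b')) (f (cinj m w (hdual E m w b')) (cinj x m (hdual E x m b))))
        = (if w = z then Gy y z h F c x else 0)" if xw: "(x, w) \<in> csupp E c" for x w
    proof -
      have x: "x \<in> Ob E" and w: "w \<in> Ob E" using csupp_Ob[OF xw] by auto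
      define Y where "Y = (\<Sum>b\<in>hbasis E x y. \<Sum>b'\<in>hbasis E y z.
              sp (c x z (cmp E x y z b b')) (sp (hdual E y z b' h) (F (cinj x y (hdual E x y b)))))"
      have term_eq: "sp (c x w (cmp E x m w b b')) (f (cinj m w (hdual E m w b')) (cinj x m (hdual E x m b)))
         = (if m = y \<and> w = z then sp (c x z (cmp E x y z b b')) (sp (hdual E y z b' h) (F (cinj x y (hdual E x y b)))) else 0)"
        if m: "m \<in> Ob E" for m b b'
      proof -
        have "f (cinj m w (hdual E m w b')) = fscale sp (cinj m w (hdual E m w b') y z h) F"
          using hdual_CE[OF m w] unfolding f_def by simp
        also have "\<dots> = fscale sp (if m = y \<and> w = z then hdual E m w b' h else 0) F"
          by (simp add: cinj_app)
        finally have fe: "f (cinj m w (hdual E m w b')) (cinj x m (hdual E x m b)) =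
           sp (if m = y \<and> w = z then hdual E m w b' h else 0) (F (cinj x m (hdual E x m b)))"
          by (simp add: fscale_def)
        show ?thesis unfolding fe by simp
      qed
      have "(\<Sum>m\<in>mid E x w. \<Sum>b\<in>hbasis E x m. \<Sum>b'\<in>hbasis E m w.
          sp (c x w (cmp E x m w b b')) (f (cinj m w (hdual E m w b')) (cinj x m (hdual E x m b))))
          = (\<Sum>m\<in>mid E x w. if m = y \<and> w = z then Y else 0)"
      proof (rule sum.cong[OF refl])
        fix m assume "m \<in> mid E x w"
        then have m: "m \<in> Ob E" by (simp add: mid_iff)
        show "(\<Sum>b\<in>hbasis E x m. \<Sum>b'\<in>hbasis E m w.
          sp (c x w (cmp E x m w b b')) (f (cinj m w (hdual E m w b')) (cinj x m (hdual E x m b))))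
          = (if m = y \<and> w = z then Y else 0)"
        proof (cases "m = y \<and> w = z")
          case True then show ?thesis unfolding term_eq[OF m] Y_def by simp
        next
          case False then show ?thesis unfolding term_eq[OF m] by (simp only: False if_False sum.neutral_const)
        qed
      qed
      also have "\<dots> = (if w = z then (if y \<in> mid E x w then Y else 0) else 0)"
        using mid_finite[OF x w] by (cases "w = z") simp_all
      also have "\<dots> = (if w = z then Gy y z h F c x else 0)"
      proof (cases "w = z")
        case False then show ?thesis by simp
      next
        case True
        show ?thesis
        proof (cases "y \<in> mid E x w")
          case False
          then have "Hom E x y = {0} \<or> Hom E y z = {0}" using y True by (simp add: mid_iff)
          then have "Gy y z h F c x = 0" using Gy_zero[OF c x y z h] by blast
          then show ?thesis using False True by simp
        next
          case ym: True
          have eqb: "(\<Sum>b'\<in>hbasis E y z. sp (c x z (cmp E x y z b b')) (sp (hdual E y z b' h) X))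
              = sp (c x z (cmp E x y z b h)) X" if b: "b \<in> hbasis E x y" for b X
          proof -
            have bH: "b \<in> Hom E x y" using hb(1)[OF x y] b by blast
            note L1 = cmp_lin2[OF x y z bH] and L2 = CE_D(3)[OF c x z]
            have l: "lin_on (hsc E) (*) (Hom E y z) (\<lambda>v. c x z (cmp E x y z b v))"
              unfolding lin_on_def
            proof (intro conjI ballI allI)
              fix u v assume u: "u \<in> Hom E y z" and v: "v \<in> Hom E y z"
              show "c x z (cmp E x y z b (u + v)) = c x z (cmp E x y z b u) + c x z (cmp E x y z b v)"
                using lin_on_add[OF L1 u v] lin_on_add[OF L2 cmp_in[OF x y z bH u] cmp_in[OF x y z bH v]]
                by simp
            next
              fix a u assume u: "u \<in> Hom E y z"
              show "c x z (cmp E x y z b (hsc E a u)) = a * c x z (cmp E x y z b u)"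
                using lin_on_scale[OF L1 u] lin_on_scale[OF L2 cmp_in[OF x y z bH u]] by simp
            qed
            have "(\<Sum>b'\<in>hbasis E y z. sp (c x z (cmp E x y z b b')) (sp (hdual E y z b' h) X))
               = (\<Sum>b'\<in>hbasis E y z. sp (hdual E y z b' h * c x z (cmp E x y z b b')) X)"
              by (simp add: mult.commute)
            also have "\<dots> = sp (\<Sum>b'\<in>hbasis E y z. hdual E y z b' h * c x z (cmp E x y z b b')) X"
              by (simp add: V.scale_sum_left)
            also have "\<dots> = sp (c x z (cmp E x y z b h)) X"
              using dual_expand[OF y z h l] by simp
            finally show ?thesis .
          qed
          have "Y = Gy y z h F c x"
            unfolding Y_def Gy_def by (rule sum.cong[OF refl]) (rule eqb)
          then show ?thesis using ym True by simp
        qed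
      qed
      finally show ?thesis by simp
    qed
    have "comult_comp E sp f c = (\<Sum>(x, w)\<in>csupp E c. if w = z then Gy y z h F c x else 0)"
      by (rule comult_eq) (rule inner)
    also have "\<dots> = (\<Sum>(x, w)\<in>T \<times> {z}. if w = z then Gy y z h F c x else 0)"
    proof (rule sum.same_carrierI[where C = "csupp E c \<union> T \<times> {z}"])
      show "finite (csupp E c \<union> T \<times> {z})" using CE_D(1)[OF c] T(1) by simp
      show "(case xw of (x, w) \<Rightarrow> if w = z then Gy y z h F c x else 0) = 0"
        if "xw \<in> csupp E c \<union> T \<times> {z} - csupp E c" for xw
        using that Gy_zero[OF c _ y z h] T(2) by auto
      show "(case xw of (x, w) \<Rightarrow> if w = z then Gy y z h F c x else 0) = 0"
        if "xw \<in> csupp E c \<union> T \<times> {z} - T \<times> {z}" for xw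
      proof -
        obtain a w where xw: "xw = (a, w)" by fastforce
        have aw: "(a, w) \<in> csupp E c" "(a, w) \<notin> T \<times> {z}" using that xw by auto
        have a: "a \<in> Ob E" using csupp_Ob[OF aw(1)] by simp
        show ?thesis
        proof (cases "w = z")
          case True
          then have "a \<notin> T" using aw(2) by simp
          then have "Hom E a y = {0}" using T(3)[OF a] by blast
          then show ?thesis using Gy_zero[OF c a y z h] xw by simp
        qed (simp add: xw)
      qed
    qed auto
    also have "\<dots> = (\<Sum>a\<in>T. Gy y z h F c a)"
      by (simp add: sum.cartesian_product[symmetric])
    finally show "comult_comp E sp f c = (\<Sum>a\<in>T. Gy y z h F c a)" .
  qed
  show ?thesis using CA unfolding lhs rhs cact_Rk .
qed

end


definition Dg :: "('o, 'h::zero, 'k) klcat \<Rightarrow> ('o \<Rightarrow> 'o \<Rightarrow> 'h \<Rightarrow> 'k::zero) \<Rightarrow> 'o set" where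
  "Dg E c = {x \<in> Ob E. c x x \<noteq> (\<lambda>_. 0)}"

lemma ev_cinj: "ev_fun x w g (cinj a y \<psi>) = (if a = x \<and> y = w then \<psi> g else 0)"
  by (simp add: ev_fun_def cinj_def)

context lkc begin

lemma Dg_finite: assumes "c \<in> CE E" shows "finite (Dg E c)"
proof -
  have "Dg E c \<subseteq> fst ` csupp E c" unfolding Dg_def csupp_def by force
  then show ?thesis using CE_D(1)[OF assms] by (meson finite_imageI finite_subset)
qed

lemma Dsum_ext:
  fixes g :: "'k \<Rightarrow> 'o \<Rightarrow> 'a::comm_monoid_add"
  assumes c: "c \<in> CE E" and T: "finite T" "Dg E c \<subseteq> T" and g0: "\<And>x. g 0 x = 0"
  shows "(\<Sum>x\<in>Dg E c. g (c x x (idm E x)) x) = (\<Sum>x\<in>T. g (c x x (idm E x)) x)"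
proof (rule sum.mono_neutral_left[OF T])
  show "\<forall>i\<in>T - Dg E c. g (c i i (idm E i)) i = 0"
  proof
    fix x assume x: "x \<in> T - Dg E c"
    have "c x x = (\<lambda>_. 0)"
    proof (cases "x \<in> Ob E")
      case True then show ?thesis using x unfolding Dg_def by simp
    next
      case False then show ?thesis using CE_D(2)[OF c] by blast
    qed
    then show "g (c x x (idm E x)) x = 0" using g0 by simp
  qed
qed

lemma coalg_eps_Dg: "coalg_eps E c = (\<Sum>x\<in>Dg E c. c x x (idm E x))"
  unfolding coalg_eps_def Dg_def ..

lemma lin_c1: assumes c: "c \<in> CE E" and x: "x \<in> Ob E" and y: "y \<in> Ob E" and z: "z \<in> Ob E" and h: "h \<in> Hom E y z"
  shows "lin_on (hsc E) (*) (Hom E x y) (\<lambda>v. c x z (cmp E x y z v h))"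
  unfolding lin_on_def
proof (intro conjI ballI allI)
  note L1 = cmp_lin1[OF x y z h] and L2 = CE_D(3)[OF c x z]
  fix u v assume u: "u \<in> Hom E x y" and v: "v \<in> Hom E x y"
  show "c x z (cmp E x y z (u + v) h) = c x z (cmp E x y z u h) + c x z (cmp E x y z v h)"
    using lin_on_add[OF L1 u v] lin_on_add[OF L2 cmp_in[OF x y z u h] cmp_in[OF x y z v h]] by simp
next
  note L1 = cmp_lin1[OF x y z h] and L2 = CE_D(3)[OF c x z]
  fix a u assume u: "u \<in> Hom E x y"
  show "c x z (cmp E x y z (hsc E a u) h) = a * c x z (cmp E x y z u h)"
    using lin_on_scale[OF L1 u] lin_on_scale[OF L2 cmp_in[OF x y z u h]] by simp
qed

lemma Ly_finite: "y \<in> Ob E \<Longrightarrow> finite (insert x {a \<in> Ob E. Hom E a y \<noteq> {0}})"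
  using lower_set_finite by simp

end

context contra begin

lemma Rk_cinj: "x \<in> Ob E \<Longrightarrow> y \<in> Ob E \<Longrightarrow>
   Rk E sp \<phi> p (cinj x y (hdual E x y b)) = sp (\<phi> (cinj x y (hdual E x y b))) p"
  using Rk_app hdual_CE by blast

lemma extC_zero: "extC E (\<lambda>c. 0) = (\<lambda>_. 0)"
  unfolding extC_def by simp

lemma ev_ev:
  assumes x: "x \<in> Ob E" and w: "w \<in> Ob E" and y: "y \<in> Ob E" and z: "z \<in> Ob E"
    and g: "g \<in> Hom E x w" and h: "h \<in> Hom E y z" and p: "p \<in> P"
  shows "cact E sp \<pi> (ev_fun y z h) (cact E sp \<pi> (ev_fun x w g) p)
       = (if w = y then cact E sp \<pi> (ev_fun x z (cmp E x y z g h)) p else 0)"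
proof -
  define F where "F = Rk E sp (ev_fun x w g) p"
  have F: "F \<in> HomC E sp P" unfolding F_def by (rule Rk_HomC[OF clin_ev p])
  define T where "T = insert x {a \<in> Ob E. Hom E a y \<noteq> {0}}"
  have T: "finite T" "T \<subseteq> Ob E" "\<And>a. a \<in> Ob E \<Longrightarrow> Hom E a y \<noteq> {0} \<Longrightarrow> a \<in> T"
    unfolding T_def using Ly_finite[OF y] x by auto
  have "cact E sp \<pi> (ev_fun y z h) (cact E sp \<pi> (ev_fun x w g) p)
      = \<pi> (extC E (\<lambda>c. \<Sum>a\<in>T. Gy y z h F c a))"
    unfolding cact_Rk[of _ _ _ "ev_fun x w g"] F_def[symmetric] using GL[OF y z h F T] .
  also have "extC E (\<lambda>c. \<Sum>a\<in>T. Gy y z h F c a)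
      = extC E (\<lambda>c. if w = y then sp (c x z (cmp E x y z g h)) p else 0)"
  proof (rule extC_cong)
    fix c assume c: "c \<in> CE E"
    have Gya: "Gy y z h F c a = (if a = x then (if w = y then sp (c x z (cmp E x y z g h)) p else 0) else 0)"
      if a: "a \<in> T" for a
    proof -
      have aO: "a \<in> Ob E" using a T(2) by blast
      have Fv: "F (cinj a y (hdual E a y \<beta>)) = sp (if a = x \<and> y = w then hdual E a y \<beta> g else 0) p" for \<beta>
        unfolding F_def Rk_cinj[OF aO y] ev_cinj ..
      show ?thesis
      proof (cases "a = x \<and> w = y")
        case True
        then have ax: "a = x" and wy: "w = y" by auto
        have gH: "g \<in> Hom E x y" using g wy by simp
        have "Gy y z h F c a = (\<Sum>\<beta>\<in>hbasis E x y. sp (c x z (cmp E x y z \<beta> h)) (sp (hdual E x y \<beta> g) p))"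
          unfolding Gy_def Fv using ax wy by simp
        also have "\<dots> = sp (\<Sum>\<beta>\<in>hbasis E x y. hdual E x y \<beta> g * c x z (cmp E x y z \<beta> h)) p"
          by (simp add: V.scale_sum_left mult.commute)
        also have "\<dots> = sp (c x z (cmp E x y z g h)) p"
          using dual_expand[OF x y gH lin_c1[OF c x y z h]] by simp
        finally show ?thesis using ax wy by simp
      next
        case False
        then have "\<not> (a = x \<and> y = w)" by auto
        then have nc: "(a = x \<and> y = w) = False" by simp
        have "Gy y z h F c a = 0" unfolding Gy_def Fv
          by (simp only: nc if_False V.scale_zero_left V.scale_zero_right mult_zero_right sum.neutral_const)
        then show ?thesis using False by auto
      qed
    qed
    have "(\<Sum>a\<in>T. Gy y z h F c a) = (\<Sum>a\<in>T. if a = x then (if w = y then sp (c x z (cmp E x y z g h)) p else 0) else 0)"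
      by (rule sum.cong[OF refl]) (rule Gya)
    also have "\<dots> = (if w = y then sp (c x z (cmp E x y z g h)) p else 0)"
      using T(1) unfolding T_def by simp
    finally show "(\<Sum>a\<in>T. Gy y z h F c a) = (if w = y then sp (c x z (cmp E x y z g h)) p else 0)" .
  qed
  finally show ?thesis
  proof (cases "w = y")
    case True
    assume eq: "cact E sp \<pi> (ev_fun y z h) (cact E sp \<pi> (ev_fun x w g) p) =
      \<pi> (extC E (\<lambda>c. if w = y then sp (c x z (cmp E x y z g h)) p else 0))"
    show ?thesis using eq True unfolding cact_def ev_fun_def by simp
  next
    case False
    assume eq: "cact E sp \<pi> (ev_fun y z h) (cact E sp \<pi> (ev_fun x w g) p) =
      \<pi> (extC E (\<lambda>c. if w = y then sp (c x z (cmp E x y z g h)) p else 0))"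
    show ?thesis using eq False by (simp add: extC_zero pi_zero)
  qed
qed

lemma e_pi:
  assumes y: "y \<in> Ob E" and F: "F \<in> HomC E sp P"
    and T: "finite T" "T \<subseteq> Ob E" "\<And>a. a \<in> Ob E \<Longrightarrow> Hom E a y \<noteq> {0} \<Longrightarrow> a \<in> T"
  shows "cact E sp \<pi> (e_fun E y) (\<pi> F)
     = (\<Sum>a\<in>T. \<Sum>\<beta>\<in>hbasis E a y. cact E sp \<pi> (ev_fun a y \<beta>) (F (cinj a y (hdual E a y \<beta>))))"
proof -
  have Fin: "F (cinj a y (hdual E a y \<beta>)) \<in> P" if "a \<in> T" for a \<beta>
    using HomC_D(2)[OF F hdual_CE] that T(2) y by blast
  have "cact E sp \<pi> (e_fun E y) (\<pi> F) = \<pi> (extC E (\<lambda>c. \<Sum>a\<in>T. Gy y y (idm E y) F c a))"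
    unfolding e_is_ev using GL[OF y y id_in[OF y] F T] .
  also have "extC E (\<lambda>c. \<Sum>a\<in>T. Gy y y (idm E y) F c a)
     = (\<lambda>c. \<Sum>a\<in>T. \<Sum>\<beta>\<in>hbasis E a y. Rk E sp (ev_fun a y \<beta>) (F (cinj a y (hdual E a y \<beta>))) c)"
  proof
    fix c
    show "extC E (\<lambda>c. \<Sum>a\<in>T. Gy y y (idm E y) F c a) c
       = (\<Sum>a\<in>T. \<Sum>\<beta>\<in>hbasis E a y. Rk E sp (ev_fun a y \<beta>) (F (cinj a y (hdual E a y \<beta>))) c)"
    proof (cases "c \<in> CE E")
      case True
      have "Gy y y (idm E y) F c a = (\<Sum>\<beta>\<in>hbasis E a y. Rk E sp (ev_fun a y \<beta>) (F (cinj a y (hdual E a y \<beta>))) c)"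
        if a: "a \<in> T" for a
        unfolding Gy_def
      proof (rule sum.cong[OF refl])
        fix \<beta> assume b: "\<beta> \<in> hbasis E a y"
        have aO: "a \<in> Ob E" using a T(2) by blast
        have "cmp E a y y \<beta> (idm E y) = \<beta>" using cmp_idr[OF aO y] hb(1)[OF aO y] b by blast
        then show "sp (c a y (cmp E a y y \<beta> (idm E y))) (F (cinj a y (hdual E a y \<beta>)))
            = Rk E sp (ev_fun a y \<beta>) (F (cinj a y (hdual E a y \<beta>))) c"
          using Rk_app[OF True] by (simp add: ev_fun_def)
      qed
      then show ?thesis using True unfolding extC_def by simp
    next
      case False
      then show ?thesis unfolding extC_def by (simp add: Rk_out)
    qed
  qed
  also have "\<pi> \<dots> = (\<Sum>a\<in>T. \<pi> (\<lambda>c. \<Sum>\<beta>\<in>hbasis E a y. Rk E sp (ev_fun a y \<beta>) (F (cinj a y (hdual E a y \<beta>))) c))"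
    by (rule pi_sum) (intro HomC_sum Rk_HomC clin_ev Fin)
  also have "\<dots> = (\<Sum>a\<in>T. \<Sum>\<beta>\<in>hbasis E a y. cact E sp \<pi> (ev_fun a y \<beta>) (F (cinj a y (hdual E a y \<beta>))))"
  proof (rule sum.cong[OF refl])
    fix a assume a: "a \<in> T"
    show "\<pi> (\<lambda>c. \<Sum>\<beta>\<in>hbasis E a y. Rk E sp (ev_fun a y \<beta>) (F (cinj a y (hdual E a y \<beta>))) c)
      = (\<Sum>\<beta>\<in>hbasis E a y. cact E sp \<pi> (ev_fun a y \<beta>) (F (cinj a y (hdual E a y \<beta>))))"
      unfolding cact_Rk by (rule pi_sum) (intro Rk_HomC clin_ev Fin a)
  qed
  finally show ?thesis .
qed

end


context lkc begin

lemma lin_c2: assumes c: "c \<in> CE E" and x: "x \<in> Ob E" and y: "y \<in> Ob E" and z: "z \<in> Ob E" and g: "g \<in> Hom E x y"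
  shows "lin_on (hsc E) (*) (Hom E y z) (\<lambda>v. c x z (cmp E x y z g v))"
  unfolding lin_on_def
proof (intro conjI ballI allI)
  note L1 = cmp_lin2[OF x y z g] and L2 = CE_D(3)[OF c x z]
  fix u v assume u: "u \<in> Hom E y z" and v: "v \<in> Hom E y z"
  show "c x z (cmp E x y z g (u + v)) = c x z (cmp E x y z g u) + c x z (cmp E x y z g v)"
    using lin_on_add[OF L1 u v] lin_on_add[OF L2 cmp_in[OF x y z g u] cmp_in[OF x y z g v]] by simp
next
  note L1 = cmp_lin2[OF x y z g] and L2 = CE_D(3)[OF c x z]
  fix a u assume u: "u \<in> Hom E y z"
  show "c x z (cmp E x y z g (hsc E a u)) = a * c x z (cmp E x y z g u)"
    using lin_on_scale[OF L1 u] lin_on_scale[OF L2 cmp_in[OF x y z g u]] by simp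
qed

lemma Dg_cinj: "Dg E (cinj m w \<phi>) \<subseteq> {m}"
  unfolding Dg_def cinj_def by auto

lemma Dg_sub: "Dg E c \<subseteq> Ob E" unfolding Dg_def by auto

lemma x_mid: "x \<in> Ob E \<Longrightarrow> x \<in> mid E x x"
  unfolding mid_iff using id_in id_ne by blast

lemma diag_sum:
  assumes c: "c \<in> CE E"
  shows "(\<Sum>(x, w)\<in>csupp E c. if x = w then g x else 0) = (\<Sum>x\<in>Dg E c. g x)"
proof -
  have "(\<Sum>(x, w)\<in>csupp E c. if x = w then g x else 0) = (\<Sum>xw\<in>csupp E c. if fst xw = snd xw then g (fst xw) else 0)"
    by (simp add: case_prod_beta)
  also have "\<dots> = (\<Sum>xw\<in>{xw\<in>csupp E c. fst xw = snd xw}. g (fst xw))"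
    by (rule sum.inter_filter[symmetric, OF CE_D(1)[OF c]])
  also have "{xw\<in>csupp E c. fst xw = snd xw} = (\<lambda>x. (x, x)) ` Dg E c"
    unfolding Dg_def csupp_def by auto
  also have "(\<Sum>xw\<in>(\<lambda>x. (x, x)) ` Dg E c. g (fst xw)) = (\<Sum>x\<in>Dg E c. g x)"
    by (subst sum.reindex) (auto simp: inj_on_def)
  finally show ?thesis .
qed

end

context contra begin

lemma K1_gen:
  assumes q: "q \<in> P"
  shows "\<pi> (extC E (\<lambda>c. \<Sum>x\<in>Dg E c. sp (c x x (idm E x)) (cact E sp \<pi> (e_fun E x) q))) = q"
proof -
  define R where "R x = Rk E sp (e_fun E x) q" for x
  have R: "R x \<in> HomC E sp P" for x unfolding R_def by (rule Rk_HomC[OF clin_e q])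
  define f where "f = (\<lambda>c''. if c'' \<in> CE E then (\<lambda>c'. \<Sum>x\<in>Dg E c''. sp (c'' x x (idm E x)) (R x c')) else (\<lambda>_. 0))"
  have fT: "f c'' c' = (\<Sum>x\<in>T. sp (c'' x x (idm E x)) (R x c'))"
    if "c'' \<in> CE E" "finite T" "Dg E c'' \<subseteq> T" for c'' c' T
    unfolding f_def using that Dsum_ext[OF that, of "\<lambda>k x. sp k (R x c')"] by simp
  have f_in: "\<forall>c\<in>CE E. f c \<in> HomC E sp P"
  proof
    fix c assume c: "c \<in> CE E"
    have "f c = (\<lambda>c'. \<Sum>x\<in>Dg E c. fscale sp (c x x (idm E x)) (R x) c')"
      unfolding f_def fscale_def using c by simp
    then show "f c \<in> HomC E sp P" using HomC_sum[of "Dg E c" "\<lambda>x. fscale sp (c x x (idm E x)) (R x)"]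
      HomC_scale[OF R] by simp
  qed
  have f_lin: "lin_on cscale (fscale sp) (CE E) f"
    unfolding lin_on_def
  proof (intro conjI ballI allI)
    fix u v assume u: "u \<in> CE E" and v: "v \<in> CE E"
    define T where "T = Dg E u \<union> Dg E v \<union> Dg E (u + v)"
    have T: "finite T" using Dg_finite u v CE_add[OF u v] unfolding T_def by blast
    have Tu: "Dg E u \<subseteq> T" and Tv: "Dg E v \<subseteq> T" unfolding T_def by auto
    show "f (u + v) = f u + f v"
    proof
      fix c'
      have "f (u + v) c' = (\<Sum>x\<in>T. sp ((u + v) x x (idm E x)) (R x c'))"
        by (rule fT[OF CE_add[OF u v] T]) (auto simp: T_def)
      also have "\<dots> = (\<Sum>x\<in>T. sp (u x x (idm E x)) (R x c')) + (\<Sum>x\<in>T. sp (v x x (idm E x)) (R x c'))"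
        by (simp add: V.scale_left_distrib sum.distrib)
      also have "\<dots> = f u c' + f v c'"
        using fT[OF u T Tu, of c'] fT[OF v T Tv, of c'] by simp
      finally show "f (u + v) c' = (f u + f v) c'" by simp
    qed
  next
    fix a u assume u: "u \<in> CE E"
    define T where "T = Dg E u \<union> Dg E (cscale a u)"
    have T: "finite T" using Dg_finite u CE_scale[OF u] unfolding T_def by blast
    have Tu: "Dg E u \<subseteq> T" unfolding T_def by auto
    show "f (cscale a u) = fscale sp a (f u)"
    proof
      fix c'
      have "f (cscale a u) c' = (\<Sum>x\<in>T. sp (cscale a u x x (idm E x)) (R x c'))"
        by (rule fT[OF CE_scale[OF u] T]) (auto simp: T_def)
      also have "\<dots> = sp a (\<Sum>x\<in>T. sp (u x x (idm E x)) (R x c'))"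
        by (simp add: cscale_def V.scale_sum_right)
      also have "\<dots> = sp a (f u c')"
        using fT[OF u T Tu, of c'] by simp
      finally show "f (cscale a u) c' = fscale sp a (f u) c'" by (simp add: fscale_def)
    qed
  qed
  have f_out: "\<forall>c. c \<notin> CE E \<longrightarrow> f c = 0" unfolding f_def by (simp add: zero_fun_def)
  note CA = cassoc[OF f_in f_lin f_out]
  have lhs: "extC E (\<lambda>c. \<pi> (f c)) = extC E (\<lambda>c. \<Sum>x\<in>Dg E c. sp (c x x (idm E x)) (cact E sp \<pi> (e_fun E x) q))"
  proof (rule extC_cong)
    fix c assume c: "c \<in> CE E"
    have "\<pi> (f c) = \<pi> (\<lambda>c'. \<Sum>x\<in>Dg E c. fscale sp (c x x (idm E x)) (R x) c')"
      unfolding f_def fscale_def using c by simp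
    also have "\<dots> = (\<Sum>x\<in>Dg E c. \<pi> (fscale sp (c x x (idm E x)) (R x)))"
      by (rule pi_sum) (rule HomC_scale[OF R])
    also have "\<dots> = (\<Sum>x\<in>Dg E c. sp (c x x (idm E x)) (cact E sp \<pi> (e_fun E x) q))"
      by (rule sum.cong[OF refl]) (simp add: pi_scale[OF R, unfolded R_def] R_def cact_Rk)
    finally show "\<pi> (f c) = (\<Sum>x\<in>Dg E c. sp (c x x (idm E x)) (cact E sp \<pi> (e_fun E x) q))" .
  qed
  have rhs: "extC E (comult_comp E sp f) = extC E (\<lambda>c. sp (coalg_eps E c) q)"
  proof (rule extC_cong)
    fix c assume c: "c \<in> CE E"
    have inner: "(\<Sum>m\<in>mid E x w. \<Sum>b\<in>hbasis E x m. \<Sum>b'\<in>hbasis E m w.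
        sp (c x w (cmp E x m w b b')) (f (cinj m w (hdual E m w b')) (cinj x m (hdual E x m b))))
        = (if x = w then sp (c x x (idm E x)) q else 0)" if xw: "(x, w) \<in> csupp E c" for x w
    proof -
      have x: "x \<in> Ob E" and w: "w \<in> Ob E" using csupp_Ob[OF xw] by auto
      have term_eq: "sp (c x w (cmp E x m w b b')) (f (cinj m w (hdual E m w b')) (cinj x m (hdual E x m b)))
         = (if m = x \<and> w = x then sp (c x x (cmp E x x x b b')) (sp (hdual E x x b' (idm E x)) (sp (hdual E x x b (idm E x)) q)) else 0)"
        if m: "m \<in> Ob E" for m b b'
      proof -
        have "f (cinj m w (hdual E m w b')) (cinj x m (hdual E x m b))
           = (\<Sum>a\<in>{m}. sp (cinj m w (hdual E m w b') a a (idm E a)) (R a (cinj x m (hdual E x m b))))"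
          by (rule fT[OF hdual_CE[OF m w]]) (simp_all add: Dg_cinj)
        also have "\<dots> = sp (if w = m then hdual E m w b' (idm E m) else 0) (sp (if x = m then hdual E x m b (idm E m) else 0) q)"
          unfolding R_def Rk_cinj[OF x m] by (simp add: cinj_app e_fun_def)
        finally have fe: "f (cinj m w (hdual E m w b')) (cinj x m (hdual E x m b)) =
           sp (if w = m then hdual E m w b' (idm E m) else 0) (sp (if x = m then hdual E x m b (idm E m) else 0) q)" .
        show ?thesis
        proof (cases "m = x \<and> w = x")
          case True then show ?thesis unfolding fe by simp
        next
          case False
          then have "(w = m \<and> x = m) = False" by auto
          then show ?thesis unfolding fe by (cases "w = m") auto
        qed
      qed
      define Z where "Z = (\<Sum>b\<in>hbasis E x x. \<Sum>b'\<in>hbasis E x x.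
              sp (c x x (cmp E x x x b b')) (sp (hdual E x x b' (idm E x)) (sp (hdual E x x b (idm E x)) q)))"
      have "(\<Sum>m\<in>mid E x w. \<Sum>b\<in>hbasis E x m. \<Sum>b'\<in>hbasis E m w.
          sp (c x w (cmp E x m w b b')) (f (cinj m w (hdual E m w b')) (cinj x m (hdual E x m b))))
          = (\<Sum>m\<in>mid E x w. if m = x \<and> w = x then Z else 0)"
      proof (rule sum.cong[OF refl])
        fix m assume "m \<in> mid E x w"
        then have m: "m \<in> Ob E" by (simp add: mid_iff)
        show "(\<Sum>b\<in>hbasis E x m. \<Sum>b'\<in>hbasis E m w.
          sp (c x w (cmp E x m w b b')) (f (cinj m w (hdual E m w b')) (cinj x m (hdual E x m b))))
          = (if m = x \<and> w = x then Z else 0)"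
        proof (cases "m = x \<and> w = x")
          case True then show ?thesis unfolding term_eq[OF m] Z_def by simp
        next
          case False then show ?thesis unfolding term_eq[OF m] by (simp only: False if_False sum.neutral_const)
        qed
      qed
      also have "\<dots> = (if x = w then Z else 0)"
      proof (cases "x = w")
        case True
        then show ?thesis using mid_finite[OF x w] x_mid[OF x] by simp
      next
        case False then show ?thesis by auto
      qed
      also have "Z = sp (c x x (idm E x)) q"
      proof -
        have i: "(\<Sum>b'\<in>hbasis E x x. sp (c x x (cmp E x x x b b')) (sp (hdual E x x b' (idm E x)) X))
            = sp (c x x b) X" if b: "b \<in> hbasis E x x" for b X
        proof -
          have bH: "b \<in> Hom E x x" using hb(1)[OF x x] b by blast
          have "(\<Sum>b'\<in>hbasis E x x. sp (c x x (cmp E x x x b b')) (sp (hdual E x x b' (idm E x)) X))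
             = sp (\<Sum>b'\<in>hbasis E x x. hdual E x x b' (idm E x) * c x x (cmp E x x x b b')) X"
            by (simp add: V.scale_sum_left mult.commute)
          also have "\<dots> = sp (c x x (cmp E x x x b (idm E x))) X"
            using dual_expand[OF x x id_in[OF x] lin_c2[OF c x x x bH]] by simp
          also have "\<dots> = sp (c x x b) X" using cmp_idr[OF x x bH] by simp
          finally show ?thesis .
        qed
        have "Z = (\<Sum>b\<in>hbasis E x x. sp (c x x b) (sp (hdual E x x b (idm E x)) q))"
          unfolding Z_def by (rule sum.cong[OF refl]) (rule i)
        also have "\<dots> = sp (\<Sum>b\<in>hbasis E x x. hdual E x x b (idm E x) * c x x b) q"
          by (simp add: V.scale_sum_left mult.commute)
        also have "\<dots> = sp (c x x (idm E x)) q"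
          using dual_expand[OF x x id_in[OF x] CE_D(3)[OF c x x]] by simp
        finally show ?thesis .
      qed
      finally show ?thesis by simp
    qed
    have "comult_comp E sp f c = (\<Sum>(x, w)\<in>csupp E c. if x = w then sp (c x x (idm E x)) q else 0)"
      by (rule comult_eq) (rule inner)
    also have "\<dots> = (\<Sum>x\<in>Dg E c. sp (c x x (idm E x)) q)"
      by (rule diag_sum[OF c])
    also have "\<dots> = sp (coalg_eps E c) q"
      unfolding coalg_eps_Dg by (simp add: V.scale_sum_left)
    finally show "comult_comp E sp f c = sp (coalg_eps E c) q" .
  qed
  show ?thesis using CA unfolding lhs rhs counit[OF q] .
qed

lemma K1:
  assumes q: "q \<in> P" and e0: "\<And>x. x \<in> Ob E \<Longrightarrow> cact E sp \<pi> (e_fun E x) q = 0"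
  shows "q = 0"
proof -
  have "extC E (\<lambda>c. \<Sum>x\<in>Dg E c. sp (c x x (idm E x)) (cact E sp \<pi> (e_fun E x) q)) = extC E (\<lambda>c. 0)"
  proof (rule extC_cong)
    fix c
    show "(\<Sum>x\<in>Dg E c. sp (c x x (idm E x)) (cact E sp \<pi> (e_fun E x) q)) = 0"
      using e0 Dg_sub by (intro sum.neutral) auto
  qed
  then show ?thesis using K1_gen[OF q] by (simp add: extC_zero pi_zero)
qed

end


context contra begin

definition FS :: "('o \<Rightarrow> 'p) \<Rightarrow> ('o \<Rightarrow> 'o \<Rightarrow> 'h \<Rightarrow> 'k) \<Rightarrow> 'p" where
  "FS q = extC E (\<lambda>c. \<Sum>x\<in>Dg E c. sp (c x x (idm E x)) (q x))"

lemma FS_T: assumes c: "c \<in> CE E" and T: "finite T" "Dg E c \<subseteq> T"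
  shows "FS q c = (\<Sum>x\<in>T. sp (c x x (idm E x)) (q x))"
  unfolding FS_def extC_def using c Dsum_ext[OF c T, of "\<lambda>k x. sp k (q x)"] by simp

lemma FS_HomC: assumes q: "\<And>x. x \<in> Ob E \<Longrightarrow> q x \<in> P" shows "FS q \<in> HomC E sp P"
proof (rule HomC_I)
  show "lin_on cscale sp (CE E) (FS q)"
    unfolding lin_on_def
  proof (intro conjI ballI allI)
    fix u v assume u: "u \<in> CE E" and v: "v \<in> CE E"
    define T where "T = Dg E u \<union> Dg E v \<union> Dg E (u + v)"
    have T: "finite T" using Dg_finite u v CE_add[OF u v] unfolding T_def by blast
    have Tu: "Dg E u \<subseteq> T" and Tv: "Dg E v \<subseteq> T" and Tuv: "Dg E (u + v) \<subseteq> T" unfolding T_def by auto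
    have "FS q (u + v) = (\<Sum>x\<in>T. sp ((u + v) x x (idm E x)) (q x))" by (rule FS_T[OF CE_add[OF u v] T Tuv])
    also have "\<dots> = (\<Sum>x\<in>T. sp (u x x (idm E x)) (q x)) + (\<Sum>x\<in>T. sp (v x x (idm E x)) (q x))"
      by (simp add: V.scale_left_distrib sum.distrib)
    also have "\<dots> = FS q u + FS q v" using FS_T[OF u T Tu] FS_T[OF v T Tv] by simp
    finally show "FS q (u + v) = FS q u + FS q v" .
  next
    fix a u assume u: "u \<in> CE E"
    define T where "T = Dg E u \<union> Dg E (cscale a u)"
    have T: "finite T" using Dg_finite u CE_scale[OF u] unfolding T_def by blast
    have Tu: "Dg E u \<subseteq> T" and Tau: "Dg E (cscale a u) \<subseteq> T" unfolding T_def by auto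
    have "FS q (cscale a u) = (\<Sum>x\<in>T. sp (cscale a u x x (idm E x)) (q x))" by (rule FS_T[OF CE_scale[OF u] T Tau])
    also have "\<dots> = sp a (\<Sum>x\<in>T. sp (u x x (idm E x)) (q x))"
      by (simp add: cscale_def V.scale_sum_right)
    also have "\<dots> = sp a (FS q u)" using FS_T[OF u T Tu] by simp
    finally show "FS q (cscale a u) = sp a (FS q u)" .
  qed
  show "FS q c \<in> P" if "c \<in> CE E" for c
    unfolding FS_def extC_def using that Dg_sub q by (auto intro!: P_sum P_scale)
  show "FS q c = 0" if "c \<notin> CE E" for c
    unfolding FS_def extC_def using that by simp
qed

lemma e_fsum:
  assumes y: "y \<in> Ob E" and q: "\<And>x. x \<in> Ob E \<Longrightarrow> q x \<in> P"
  shows "cact E sp \<pi> (e_fun E y) (\<pi> (FS q)) = cact E sp \<pi> (e_fun E y) (q y)"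
proof -
  define T where "T = insert y {a \<in> Ob E. Hom E a y \<noteq> {0}}"
  have T: "finite T" "T \<subseteq> Ob E" "\<And>a. a \<in> Ob E \<Longrightarrow> Hom E a y \<noteq> {0} \<Longrightarrow> a \<in> T"
    unfolding T_def using Ly_finite[OF y] y by auto
  have "cact E sp \<pi> (e_fun E y) (\<pi> (FS q))
     = (\<Sum>a\<in>T. \<Sum>\<beta>\<in>hbasis E a y. cact E sp \<pi> (ev_fun a y \<beta>) (FS q (cinj a y (hdual E a y \<beta>))))"
    by (rule e_pi[OF y FS_HomC[OF q] T])
  also have "\<dots> = (\<Sum>a\<in>T. if a = y then cact E sp \<pi> (e_fun E y) (q y) else 0)"
  proof (rule sum.cong[OF refl])
    fix a assume a: "a \<in> T"
    have aO: "a \<in> Ob E" using a T(2) by blast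
    have FSc: "FS q (cinj a y (hdual E a y \<beta>)) = sp (if y = a then hdual E a y \<beta> (idm E a) else 0) (q a)" for \<beta>
    proof -
      have "FS q (cinj a y (hdual E a y \<beta>)) = (\<Sum>x\<in>{a}. sp (cinj a y (hdual E a y \<beta>) x x (idm E x)) (q x))"
        by (rule FS_T[OF hdual_CE[OF aO y]]) (simp_all add: Dg_cinj)
      then show ?thesis by (simp add: cinj_app)
    qed
    show "(\<Sum>\<beta>\<in>hbasis E a y. cact E sp \<pi> (ev_fun a y \<beta>) (FS q (cinj a y (hdual E a y \<beta>))))
        = (if a = y then cact E sp \<pi> (e_fun E y) (q y) else 0)"
    proof (cases "a = y")
      case False
      then show ?thesis unfolding FSc using cact_zero_p[OF clin_ev] by auto
    next
      case True
      have qy: "q y \<in> P" using q y by blast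
      have "(\<Sum>\<beta>\<in>hbasis E a y. cact E sp \<pi> (ev_fun a y \<beta>) (FS q (cinj a y (hdual E a y \<beta>))))
          = (\<Sum>\<beta>\<in>hbasis E y y. cact E sp \<pi> (\<lambda>c. hdual E y y \<beta> (idm E y) * ev_fun y y \<beta> c) (q y))"
        unfolding True FSc[unfolded True] using cact_scale_p[OF clin_ev qy] cact_scale_phi[OF clin_ev qy] by simp
      also have "\<dots> = cact E sp \<pi> (\<lambda>c. \<Sum>\<beta>\<in>hbasis E y y. hdual E y y \<beta> (idm E y) * ev_fun y y \<beta> c) (q y)"
        by (rule cact_sum_phi[symmetric]) (simp_all add: clin_scale clin_ev qy)
      also have "\<dots> = cact E sp \<pi> (e_fun E y) (q y)"
      proof (rule cact_cong)
        fix c assume c: "c \<in> CE E"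
        show "(\<Sum>\<beta>\<in>hbasis E y y. hdual E y y \<beta> (idm E y) * ev_fun y y \<beta> c) = e_fun E y c"
          using dual_expand[OF y y id_in[OF y] CE_D(3)[OF c y y]] by (simp add: ev_fun_def e_fun_def)
      qed
      finally show ?thesis using True by simp
    qed
  qed
  also have "\<dots> = cact E sp \<pi> (e_fun E y) (q y)" using T(1) unfolding T_def by simp
  finally show ?thesis .
qed

lemma Theta_mem: "v \<in> Theta_obj E sp P \<pi> x \<longleftrightarrow> (\<exists>p\<in>P. v = cact E sp \<pi> (e_fun E x) p)"
  unfolding Theta_obj_def by blast

lemma Theta_sub: "Theta_obj E sp P \<pi> x \<subseteq> P"
  unfolding Theta_obj_def using cact_in[OF clin_e] by blast

lemma e_e: assumes x: "x \<in> Ob E" and p: "p \<in> P"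
  shows "cact E sp \<pi> (e_fun E x) (cact E sp \<pi> (e_fun E x) p) = cact E sp \<pi> (e_fun E x) p"
  using ev_ev[OF x x x x id_in[OF x] id_in[OF x] p] cmp_idl[OF x x id_in[OF x]] unfolding e_is_ev by simp

lemma e_idem: assumes x: "x \<in> Ob E" and v: "v \<in> Theta_obj E sp P \<pi> x"
  shows "cact E sp \<pi> (e_fun E x) v = v"
  using v e_e[OF x] unfolding Theta_mem by blast

lemma e_orth: assumes x: "x \<in> Ob E" and y: "y \<in> Ob E" and xy: "x \<noteq> y" and v: "v \<in> Theta_obj E sp P \<pi> x"
  shows "cact E sp \<pi> (e_fun E y) v = 0"
proof -
  obtain p where p: "p \<in> P" and vp: "v = cact E sp \<pi> (e_fun E x) p" using v unfolding Theta_mem by blast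
  show ?thesis using ev_ev[OF x x y y id_in[OF x] id_in[OF y] p] xy unfolding vp e_is_ev by simp
qed

lemma ev_in_M: assumes x: "x \<in> Ob E" and y: "y \<in> Ob E" and f: "f \<in> Hom E x y" and p: "p \<in> P"
  shows "cact E sp \<pi> (ev_fun x y f) p \<in> Theta_obj E sp P \<pi> y"
proof -
  have "cact E sp \<pi> (e_fun E y) (cact E sp \<pi> (ev_fun x y f) p) = cact E sp \<pi> (ev_fun x y f) p"
    using ev_ev[OF x y y y f id_in[OF y] p] cmp_idr[OF x y f] unfolding e_is_ev by simp
  then show ?thesis unfolding Theta_mem using cact_in[OF clin_ev p] by metis
qed

lemma ev_e: assumes a: "a \<in> Ob E" and y: "y \<in> Ob E" and f: "f \<in> Hom E a y" and p: "p \<in> P"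
  shows "cact E sp \<pi> (ev_fun a y f) (cact E sp \<pi> (e_fun E a) p) = cact E sp \<pi> (ev_fun a y f) p"
  using ev_ev[OF a a a y id_in[OF a] f p] cmp_idl[OF a y f] unfolding e_is_ev by simp

lemma K1_eq: assumes "q1 \<in> P" "q2 \<in> P" "\<And>y. y \<in> Ob E \<Longrightarrow> cact E sp \<pi> (e_fun E y) q1 = cact E sp \<pi> (e_fun E y) q2"
  shows "q1 = q2"
proof -
  have "q1 - q2 = 0"
    by (rule K1[OF P_diff[OF assms(1,2)]]) (simp add: cact_diff_p[OF clin_e assms(1,2)] assms(3))
  then show ?thesis by simp
qed

lemma Theta_subspace: "V.subspace (Theta_obj E sp P \<pi> x)"
  unfolding V.subspace_def
proof (intro conjI ballI allI)
  show "0 \<in> Theta_obj E sp P \<pi> x" unfolding Theta_mem using cact_zero_p[OF clin_e] P_0 by metis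
next
  fix u v assume u: "u \<in> Theta_obj E sp P \<pi> x" and v: "v \<in> Theta_obj E sp P \<pi> x"
  obtain p q where p: "p \<in> P" "u = cact E sp \<pi> (e_fun E x) p" and q: "q \<in> P" "v = cact E sp \<pi> (e_fun E x) q"
    using u v unfolding Theta_mem by blast
  show "u + v \<in> Theta_obj E sp P \<pi> x" unfolding Theta_mem
    using cact_add_p[OF clin_e p(1) q(1)] p q P_add by metis
next
  fix a u assume u: "u \<in> Theta_obj E sp P \<pi> x"
  obtain p where p: "p \<in> P" "u = cact E sp \<pi> (e_fun E x) p"
    using u unfolding Theta_mem by blast
  show "sp a u \<in> Theta_obj E sp P \<pi> x" unfolding Theta_mem
    using cact_scale_p[OF clin_e p(1)] p P_scale by metis
qed

lemma is_Emod_Theta: "is_Emod E sp (Theta_obj E sp P \<pi>) (Theta_act E sp \<pi>)"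
  unfolding is_Emod_def
proof (intro conjI ballI)
  show "vector_space sp" by (rule ic1)
next
  fix x assume "x \<in> Ob E"
  show "V.subspace (Theta_obj E sp P \<pi> x)" by (rule Theta_subspace)
next
  fix x y f assume x: "x \<in> Ob E" and y: "y \<in> Ob E" and f: "f \<in> Hom E x y"
  show "lin_on sp sp (Theta_obj E sp P \<pi> x) (Theta_act E sp \<pi> x y f)"
    unfolding lin_on_def Theta_act_def
    using cact_add_p[OF clin_ev] cact_scale_p[OF clin_ev] Theta_sub by blast
  show "Theta_act E sp \<pi> x y f ` Theta_obj E sp P \<pi> x \<subseteq> Theta_obj E sp P \<pi> y"
    unfolding Theta_act_def using ev_in_M[OF x y f] Theta_sub by blast
next
  fix x y v assume x: "x \<in> Ob E" and y: "y \<in> Ob E" and v: "v \<in> Theta_obj E sp P \<pi> x"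
  have vP: "v \<in> P" using v Theta_sub by blast
  show "lin_on (hsc E) sp (Hom E x y) (\<lambda>f. Theta_act E sp \<pi> x y f v)"
    unfolding lin_on_def Theta_act_def
  proof (intro conjI ballI allI)
    fix f1 f2 assume f1: "f1 \<in> Hom E x y" and f2: "f2 \<in> Hom E x y"
    have "cact E sp \<pi> (ev_fun x y (f1 + f2)) v = cact E sp \<pi> (\<lambda>c. ev_fun x y f1 c + ev_fun x y f2 c) v"
      by (rule cact_cong) (simp add: ev_fun_def lin_on_add[OF CE_D(3)[OF _ x y] f1 f2])
    also have "\<dots> = cact E sp \<pi> (ev_fun x y f1) v + cact E sp \<pi> (ev_fun x y f2) v"
      by (rule cact_add_phi[OF clin_ev clin_ev vP])
    finally show "cact E sp \<pi> (ev_fun x y (f1 + f2)) v = cact E sp \<pi> (ev_fun x y f1) v + cact E sp \<pi> (ev_fun x y f2) v" .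
  next
    fix a f assume f: "f \<in> Hom E x y"
    have "cact E sp \<pi> (ev_fun x y (hsc E a f)) v = cact E sp \<pi> (\<lambda>c. a * ev_fun x y f c) v"
      by (rule cact_cong) (simp add: ev_fun_def lin_on_scale[OF CE_D(3)[OF _ x y] f])
    also have "\<dots> = sp a (cact E sp \<pi> (ev_fun x y f) v)"
      by (rule cact_scale_phi[OF clin_ev vP])
    finally show "cact E sp \<pi> (ev_fun x y (hsc E a f)) v = sp a (cact E sp \<pi> (ev_fun x y f) v)" .
  qed
next
  fix x v assume x: "x \<in> Ob E" and v: "v \<in> Theta_obj E sp P \<pi> x"
  show "Theta_act E sp \<pi> x x (idm E x) v = v"
    unfolding Theta_act_def e_is_ev[symmetric] by (rule e_idem[OF x v])
next
  fix x y z g h v assume x: "x \<in> Ob E" and y: "y \<in> Ob E" and z: "z \<in> Ob E"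
    and g: "g \<in> Hom E x y" and h: "h \<in> Hom E y z" and v: "v \<in> Theta_obj E sp P \<pi> x"
  have vP: "v \<in> P" using v Theta_sub by blast
  show "Theta_act E sp \<pi> x z (cmp E x y z g h) v = Theta_act E sp \<pi> y z h (Theta_act E sp \<pi> x y g v)"
    unfolding Theta_act_def using ev_ev[OF x y y z g h vP] by simp
qed

end


lemma hom_cact:
  assumes cP: "contra E sp P \<pi>" and cQ: "contra E sq Q \<pi>'" and g: "contra_hom E sp P \<pi> sq Q \<pi>' g"
    and phi: "clin E \<phi>" and p: "p \<in> P"
  shows "g (cact E sp \<pi> \<phi> p) = cact E sq \<pi>' \<phi> (g p)"
proof -
  interpret A: contra E sp P \<pi> by (rule cP)
  interpret B: contra E sq Q \<pi>' by (rule cQ)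
  have gl: "lin_on sp sq P g" and gh: "\<forall>F\<in>HomC E sp P. g (\<pi> F) = \<pi>' (extC E (g \<circ> F))"
    using g unfolding contra_hom_def by blast+
  have "g (cact E sp \<pi> \<phi> p) = \<pi>' (extC E (g \<circ> Rk E sp \<phi> p))"
    unfolding cact_Rk using gh A.Rk_HomC[OF phi p] by blast
  also have "extC E (g \<circ> Rk E sp \<phi> p) = extC E (\<lambda>c. sq (\<phi> c) (g p))"
    by (rule B.extC_cong) (simp add: A.Rk_app lin_on_scale[OF gl p])
  finally show ?thesis unfolding cact_def .
qed

lemma part2:
  assumes cP: "contra E sp P \<pi>" and cQ: "contra E sq Q \<pi>'" and g: "contra_hom E sp P \<pi> sq Q \<pi>' g"
  shows "Emod_hom E sp (Theta_obj E sp P \<pi>) (Theta_act E sp \<pi>)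
                   sq (Theta_obj E sq Q \<pi>') (Theta_act E sq \<pi>') (\<lambda>x. g)"
proof -
  interpret A: contra E sp P \<pi> by (rule cP)
  interpret B: contra E sq Q \<pi>' by (rule cQ)
  have gl: "lin_on sp sq P g" and gP: "g ` P \<subseteq> Q"
    using g unfolding contra_hom_def by blast+
  show ?thesis unfolding Emod_hom_def
  proof (intro conjI ballI)
    fix x assume x: "x \<in> Ob E"
    show "lin_on sp sq (Theta_obj E sp P \<pi> x) g"
      using gl A.Theta_sub unfolding lin_on_def by blast
    show "g ` Theta_obj E sp P \<pi> x \<subseteq> Theta_obj E sq Q \<pi>' x"
    proof
      fix w assume "w \<in> g ` Theta_obj E sp P \<pi> x"
      then obtain v where v: "v \<in> Theta_obj E sp P \<pi> x" "w = g v" by blast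
      then obtain p where p: "p \<in> P" "w = g (cact E sp \<pi> (e_fun E x) p)" unfolding A.Theta_mem by blast
      then have "w = cact E sq \<pi>' (e_fun E x) (g p)" using hom_cact[OF cP cQ g clin_e] by simp
      then show "w \<in> Theta_obj E sq Q \<pi>' x" unfolding B.Theta_mem using gP p(1) by blast
    qed
  next
    fix x y f v assume x: "x \<in> Ob E" and y: "y \<in> Ob E" and f: "f \<in> Hom E x y" and v: "v \<in> Theta_obj E sp P \<pi> x"
    show "g (Theta_act E sp \<pi> x y f v) = Theta_act E sq \<pi>' x y f (g v)"
      unfolding Theta_act_def using hom_cact[OF cP cQ g clin_ev] v A.Theta_sub by blast
  qed
qed

lemma part3:
  assumes cP: "contra E sp P \<pi>" and cQ: "contra E sq Q \<pi>'" and g: "contra_hom E sp P \<pi> sq Q \<pi>' g"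
    and g': "contra_hom E sp P \<pi> sq Q \<pi>' g'"
    and agree: "\<forall>x\<in>Ob E. \<forall>p\<in>Theta_obj E sp P \<pi> x. g p = g' p"
  shows "\<forall>p\<in>P. g p = g' p"
proof
  interpret A: contra E sp P \<pi> by (rule cP)
  interpret B: contra E sq Q \<pi>' by (rule cQ)
  fix p assume p: "p \<in> P"
  have gP: "g p \<in> Q" "g' p \<in> Q" using g g' p unfolding contra_hom_def by blast+
  show "g p = g' p"
  proof (rule B.K1_eq[OF gP])
    fix y assume y: "y \<in> Ob E"
    have m: "cact E sp \<pi> (e_fun E y) p \<in> Theta_obj E sp P \<pi> y" unfolding A.Theta_mem using p by blast
    have "cact E sq \<pi>' (e_fun E y) (g p) = g (cact E sp \<pi> (e_fun E y) p)"
      using hom_cact[OF cP cQ g clin_e p] by simp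
    also have "\<dots> = g' (cact E sp \<pi> (e_fun E y) p)" using agree y m by blast
    also have "\<dots> = cact E sq \<pi>' (e_fun E y) (g' p)"
      using hom_cact[OF cP cQ g' clin_e p] by simp
    finally show "cact E sq \<pi>' (e_fun E y) (g p) = cact E sq \<pi>' (e_fun E y) (g' p)" .
  qed
qed


lemma part4:
  assumes cP: "contra E sp P \<pi>" and cQ: "contra E sq Q \<pi>'"
    and eta: "Emod_hom E sp (Theta_obj E sp P \<pi>) (Theta_act E sp \<pi>)
                   sq (Theta_obj E sq Q \<pi>') (Theta_act E sq \<pi>') \<eta>"
  shows "\<exists>g. contra_hom E sp P \<pi> sq Q \<pi>' g \<and>
             (\<forall>x\<in>Ob E. \<forall>p\<in>Theta_obj E sp P \<pi> x. g p = \<eta> x p)"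
proof -
  interpret A: contra E sp P \<pi> by (rule cP)
  interpret B: contra E sq Q \<pi>' by (rule cQ)
  let ?MP = "Theta_obj E sp P \<pi>" and ?MQ = "Theta_obj E sq Q \<pi>'"
  have e1: "lin_on sp sq (?MP x) (\<eta> x)" "\<eta> x ` ?MP x \<subseteq> ?MQ x" if "x \<in> Ob E" for x
    using eta that unfolding Emod_hom_def by blast+
  have e2: "\<eta> y (Theta_act E sp \<pi> x y f v) = Theta_act E sq \<pi>' x y f (\<eta> x v)"
    if "x \<in> Ob E" "y \<in> Ob E" "f \<in> Hom E x y" "v \<in> ?MP x" for x y f v
    using eta that unfolding Emod_hom_def by blast
  have eP: "cact E sp \<pi> (e_fun E x) p \<in> ?MP x" if "p \<in> P" for x p
    unfolding A.Theta_mem using that by blast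
  have etaQ: "\<eta> x v \<in> ?MQ x" if "x \<in> Ob E" "v \<in> ?MP x" for x v using e1(2)[OF that(1)] that(2) by blast
  have etaQ': "\<eta> x v \<in> Q" if "x \<in> Ob E" "v \<in> ?MP x" for x v using etaQ[OF that] B.Theta_sub by blast
  define qf where "qf p = (\<lambda>x. \<eta> x (cact E sp \<pi> (e_fun E x) p))" for p
  define G where "G p = \<pi>' (B.FS (qf p))" for p
  have qfQ: "qf p x \<in> Q" if "p \<in> P" "x \<in> Ob E" for p x
    unfolding qf_def using etaQ'[OF that(2) eP[OF that(1)]] .
  have GQ: "G p \<in> Q" if "p \<in> P" for p
    unfolding G_def by (rule B.pi_in[OF B.FS_HomC]) (rule qfQ[OF that])
  have eG: "cact E sq \<pi>' (e_fun E y) (G p) = \<eta> y (cact E sp \<pi> (e_fun E y) p)" if y: "y \<in> Ob E" and p: "p \<in> P" for y p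
  proof -
    have "cact E sq \<pi>' (e_fun E y) (G p) = cact E sq \<pi>' (e_fun E y) (qf p y)"
      unfolding G_def by (rule B.e_fsum[OF y]) (rule qfQ[OF p])
    also have "\<dots> = \<eta> y (cact E sp \<pi> (e_fun E y) p)"
      unfolding qf_def by (rule B.e_idem[OF y etaQ[OF y eP[OF p]]])
    finally show ?thesis .
  qed
  have Glin: "lin_on sp sq P G"
    unfolding lin_on_def
  proof (intro conjI ballI allI)
    fix u v assume u: "u \<in> P" and v: "v \<in> P"
    show "G (u + v) = G u + G v"
    proof (rule B.K1_eq[OF GQ[OF A.P_add[OF u v]] B.P_add[OF GQ[OF u] GQ[OF v]]])
      fix y assume y: "y \<in> Ob E"
      have "cact E sq \<pi>' (e_fun E y) (G (u + v)) = \<eta> y (cact E sp \<pi> (e_fun E y) (u + v))"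
        by (rule eG[OF y A.P_add[OF u v]])
      also have "\<dots> = \<eta> y (cact E sp \<pi> (e_fun E y) u + cact E sp \<pi> (e_fun E y) v)"
        using A.cact_add_p[OF clin_e u v] by simp
      also have "\<dots> = \<eta> y (cact E sp \<pi> (e_fun E y) u) + \<eta> y (cact E sp \<pi> (e_fun E y) v)"
        by (rule lin_on_add[OF e1(1)[OF y] eP[OF u] eP[OF v]])
      also have "\<dots> = cact E sq \<pi>' (e_fun E y) (G u + G v)"
        using B.cact_add_p[OF clin_e GQ[OF u] GQ[OF v]] eG[OF y u] eG[OF y v] by simp
      finally show "cact E sq \<pi>' (e_fun E y) (G (u + v)) = cact E sq \<pi>' (e_fun E y) (G u + G v)" .
    qed
  next
    fix a u assume u: "u \<in> P"
    show "G (sp a u) = sq a (G u)"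
    proof (rule B.K1_eq[OF GQ[OF A.P_scale[OF u]] B.P_scale[OF GQ[OF u]]])
      fix y assume y: "y \<in> Ob E"
      have "cact E sq \<pi>' (e_fun E y) (G (sp a u)) = \<eta> y (cact E sp \<pi> (e_fun E y) (sp a u))"
        by (rule eG[OF y A.P_scale[OF u]])
      also have "\<dots> = \<eta> y (sp a (cact E sp \<pi> (e_fun E y) u))"
        using A.cact_scale_p[OF clin_e u] by simp
      also have "\<dots> = sq a (\<eta> y (cact E sp \<pi> (e_fun E y) u))"
        by (rule lin_on_scale[OF e1(1)[OF y] eP[OF u]])
      also have "\<dots> = cact E sq \<pi>' (e_fun E y) (sq a (G u))"
        using B.cact_scale_p[OF clin_e GQ[OF u]] eG[OF y u] by simp
      finally show "cact E sq \<pi>' (e_fun E y) (G (sp a u)) = cact E sq \<pi>' (e_fun E y) (sq a (G u))" .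
    qed
  qed
  have GF_HomC: "extC E (G \<circ> F) \<in> HomC E sq Q" if F: "F \<in> HomC E sp P" for F
  proof (rule B.HomC_I)
    have Fl: "lin_on cscale sp (CE E) F" and FP: "\<And>c. c \<in> CE E \<Longrightarrow> F c \<in> P" using A.HomC_D[OF F] by blast+
    show "lin_on cscale sq (CE E) (extC E (G \<circ> F))"
      unfolding lin_on_def extC_def
      using A.CE_add A.CE_scale lin_on_add[OF Fl] lin_on_scale[OF Fl] lin_on_add[OF Glin] lin_on_scale[OF Glin] FP
      by simp
    show "extC E (G \<circ> F) c \<in> Q" if "c \<in> CE E" for c
      unfolding extC_def using that GQ FP by simp
    show "extC E (G \<circ> F) c = 0" if "c \<notin> CE E" for c
      unfolding extC_def using that by simp
  qed
  have Gpi: "G (\<pi> F) = \<pi>' (extC E (G \<circ> F))" if F: "F \<in> HomC E sp P" for F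
  proof (rule B.K1_eq[OF GQ[OF A.pi_in[OF F]] B.pi_in[OF GF_HomC[OF F]]])
    fix y assume y: "y \<in> Ob E"
    define T where "T = insert y {a \<in> Ob E. Hom E a y \<noteq> {0}}"
    have T: "finite T" "T \<subseteq> Ob E" "\<And>a. a \<in> Ob E \<Longrightarrow> Hom E a y \<noteq> {0} \<Longrightarrow> a \<in> T"
      unfolding T_def using A.Ly_finite[OF y] y by auto
    have FP: "F (cinj a y (hdual E a y \<beta>)) \<in> P" if "a \<in> T" for a \<beta>
      using A.HomC_D(2)[OF F A.hdual_CE] that T(2) y by blast
    have bH: "\<beta> \<in> Hom E a y" if "a \<in> T" "\<beta> \<in> hbasis E a y" for a \<beta>
      using A.hb(1) that T(2) y by blast
    have inM: "cact E sp \<pi> (ev_fun a y \<beta>) (F (cinj a y (hdual E a y \<beta>))) \<in> ?MP y"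
      if "a \<in> T" "\<beta> \<in> hbasis E a y" for a \<beta>
      using A.ev_in_M[OF _ y bH[OF that] FP[OF that(1)]] that T(2) by blast
    have sub: "0 \<in> ?MP y" "\<And>u v. u \<in> ?MP y \<Longrightarrow> v \<in> ?MP y \<Longrightarrow> u + v \<in> ?MP y"
      using A.V.subspace_0[OF A.Theta_subspace] A.V.subspace_add[OF A.Theta_subspace] by blast+
    have sumM: "(\<Sum>\<beta>\<in>hbasis E a y. cact E sp \<pi> (ev_fun a y \<beta>) (F (cinj a y (hdual E a y \<beta>)))) \<in> ?MP y"
      if "a \<in> T" for a
      by (rule A.V.subspace_sum[OF A.Theta_subspace]) (rule inM[OF that])
    have one: "\<eta> y (cact E sp \<pi> (ev_fun a y \<beta>) p) = cact E sq \<pi>' (ev_fun a y \<beta>) (G p)"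
      if a: "a \<in> Ob E" and b: "\<beta> \<in> Hom E a y" and p: "p \<in> P" for a \<beta> p
    proof -
      have "\<eta> y (cact E sp \<pi> (ev_fun a y \<beta>) p) = \<eta> y (Theta_act E sp \<pi> a y \<beta> (cact E sp \<pi> (e_fun E a) p))"
        unfolding Theta_act_def using A.ev_e[OF a y b p] by simp
      also have "\<dots> = Theta_act E sq \<pi>' a y \<beta> (\<eta> a (cact E sp \<pi> (e_fun E a) p))"
        by (rule e2[OF a y b eP[OF p]])
      also have "\<dots> = cact E sq \<pi>' (ev_fun a y \<beta>) (cact E sq \<pi>' (e_fun E a) (G p))"
        unfolding Theta_act_def using eG[OF a p] by simp
      also have "\<dots> = cact E sq \<pi>' (ev_fun a y \<beta>) (G p)"
        by (rule B.ev_e[OF a y b GQ[OF p]])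
      finally show ?thesis .
    qed
    have "cact E sq \<pi>' (e_fun E y) (G (\<pi> F)) = \<eta> y (cact E sp \<pi> (e_fun E y) (\<pi> F))"
      by (rule eG[OF y A.pi_in[OF F]])
    also have "\<dots> = \<eta> y (\<Sum>a\<in>T. \<Sum>\<beta>\<in>hbasis E a y. cact E sp \<pi> (ev_fun a y \<beta>) (F (cinj a y (hdual E a y \<beta>))))"
      using A.e_pi[OF y F T] by simp
    also have "\<dots> = (\<Sum>a\<in>T. \<eta> y (\<Sum>\<beta>\<in>hbasis E a y. cact E sp \<pi> (ev_fun a y \<beta>) (F (cinj a y (hdual E a y \<beta>)))))"
      by (rule lin_on_sum[OF e1(1)[OF y]]) (use sub sumM in blast)+
    also have "\<dots> = (\<Sum>a\<in>T. \<Sum>\<beta>\<in>hbasis E a y. \<eta> y (cact E sp \<pi> (ev_fun a y \<beta>) (F (cinj a y (hdual E a y \<beta>)))))"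
      by (rule sum.cong[OF refl], rule lin_on_sum[OF e1(1)[OF y]]) (use sub inM in blast)+
    also have "\<dots> = (\<Sum>a\<in>T. \<Sum>\<beta>\<in>hbasis E a y. cact E sq \<pi>' (ev_fun a y \<beta>) (G (F (cinj a y (hdual E a y \<beta>)))))"
      by (rule sum.cong[OF refl], rule sum.cong[OF refl])
         (use one bH FP T(2) in blast)
    also have "\<dots> = (\<Sum>a\<in>T. \<Sum>\<beta>\<in>hbasis E a y. cact E sq \<pi>' (ev_fun a y \<beta>) (extC E (G \<circ> F) (cinj a y (hdual E a y \<beta>))))"
      using A.hdual_CE y T(2) unfolding extC_def by (intro sum.cong refl) auto
    also have "\<dots> = cact E sq \<pi>' (e_fun E y) (\<pi>' (extC E (G \<circ> F)))"
      by (rule B.e_pi[OF y GF_HomC[OF F] T, symmetric])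
    finally show "cact E sq \<pi>' (e_fun E y) (G (\<pi> F)) = cact E sq \<pi>' (e_fun E y) (\<pi>' (extC E (G \<circ> F)))" .
  qed
  have chom: "contra_hom E sp P \<pi> sq Q \<pi>' G"
    unfolding contra_hom_def using Glin GQ Gpi by blast
  have agree: "G p = \<eta> x p" if x: "x \<in> Ob E" and p: "p \<in> ?MP x" for x p
  proof -
    have pP: "p \<in> P" using p A.Theta_sub by blast
    show ?thesis
    proof (rule B.K1_eq[OF GQ[OF pP] etaQ'[OF x p]])
      fix y assume y: "y \<in> Ob E"
      show "cact E sq \<pi>' (e_fun E y) (G p) = cact E sq \<pi>' (e_fun E y) (\<eta> x p)"
      proof (cases "y = x")
        case True
        then show ?thesis using eG[OF y pP] A.e_idem[OF x p] B.e_idem[OF x etaQ[OF x p]] by simp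
      next
        case False
        have "\<eta> y 0 = 0" using lin_on_zero[OF e1(1)[OF y] A.V.subspace_0[OF A.Theta_subspace]] .
        then show ?thesis using eG[OF y pP] A.e_orth[OF x y _ p] B.e_orth[OF x y _ etaQ[OF x p]] False by auto
      qed
    qed
  qed
  show ?thesis using chom agree by blast
qed


lemma sum_app: "(\<Sum>i\<in>I. F i) x = (\<Sum>i\<in>I. F i x)"
  by (induction I rule: infinite_finite_induct) (simp_all add: plus_fun_def)

locale emod = lkc E for E :: "('o, 'h::ab_group_add, 'k::field) klcat" +
  fixes sm :: "'k \<Rightarrow> 'm::ab_group_add \<Rightarrow> 'm" and M :: "'o \<Rightarrow> 'm set" and \<rho> :: "'o \<Rightarrow> 'o \<Rightarrow> 'h \<Rightarrow> 'm \<Rightarrow> 'm"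
  assumes em: "is_Emod E sm M \<rho>"
begin

lemmas emp = em[unfolded is_Emod_def]
lemmas em1 = emp[THEN conjunct1]
lemmas em2 = emp[THEN conjunct2, THEN conjunct1]
lemmas em3 = emp[THEN conjunct2, THEN conjunct2, THEN conjunct1]
lemmas em4 = emp[THEN conjunct2, THEN conjunct2, THEN conjunct2, THEN conjunct1]
lemmas em5 = emp[THEN conjunct2, THEN conjunct2, THEN conjunct2, THEN conjunct2, THEN conjunct1]
lemmas em6 = emp[THEN conjunct2, THEN conjunct2, THEN conjunct2, THEN conjunct2, THEN conjunct2]

sublocale W: vector_space sm by (rule em1)

lemma M_sub: "x \<in> Ob E \<Longrightarrow> W.subspace (M x)" using em2 by blast
lemma M_0: "x \<in> Ob E \<Longrightarrow> 0 \<in> M x" using W.subspace_0[OF M_sub] .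
lemma M_add: "x \<in> Ob E \<Longrightarrow> u \<in> M x \<Longrightarrow> v \<in> M x \<Longrightarrow> u + v \<in> M x" using W.subspace_add[OF M_sub] .
lemma M_scale: "x \<in> Ob E \<Longrightarrow> u \<in> M x \<Longrightarrow> sm a u \<in> M x" using W.subspace_scale[OF M_sub] .
lemma M_sum: "x \<in> Ob E \<Longrightarrow> (\<And>i. i \<in> I \<Longrightarrow> f i \<in> M x) \<Longrightarrow> sum f I \<in> M x"
  using W.subspace_sum[OF M_sub] .

lemma rho_lin: "x \<in> Ob E \<Longrightarrow> y \<in> Ob E \<Longrightarrow> f \<in> Hom E x y \<Longrightarrow> lin_on sm sm (M x) (\<rho> x y f)"
  using em3 by blast
lemma rho_in: "x \<in> Ob E \<Longrightarrow> y \<in> Ob E \<Longrightarrow> f \<in> Hom E x y \<Longrightarrow> v \<in> M x \<Longrightarrow> \<rho> x y f v \<in> M y"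
  using em3 by blast
lemma rho_linf: "x \<in> Ob E \<Longrightarrow> y \<in> Ob E \<Longrightarrow> v \<in> M x \<Longrightarrow> lin_on (hsc E) sm (Hom E x y) (\<lambda>f. \<rho> x y f v)"
  using em4 by blast
lemma rho_id: "x \<in> Ob E \<Longrightarrow> v \<in> M x \<Longrightarrow> \<rho> x x (idm E x) v = v"
  using em5 by blast
lemma rho_comp: "x \<in> Ob E \<Longrightarrow> y \<in> Ob E \<Longrightarrow> z \<in> Ob E \<Longrightarrow> g \<in> Hom E x y \<Longrightarrow> h \<in> Hom E y z \<Longrightarrow> v \<in> M x
   \<Longrightarrow> \<rho> x z (cmp E x y z g h) v = \<rho> y z h (\<rho> x y g v)"
  using em6 by blast

lemma rho_0v: "x \<in> Ob E \<Longrightarrow> y \<in> Ob E \<Longrightarrow> f \<in> Hom E x y \<Longrightarrow> \<rho> x y f 0 = 0"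
  using lin_on_zero[OF rho_lin M_0] by blast

lemma rho_0f: "x \<in> Ob E \<Longrightarrow> y \<in> Ob E \<Longrightarrow> v \<in> M x \<Longrightarrow> \<rho> x y 0 v = 0"
  using lin_on_zero[OF rho_linf hom_0] by blast

lemma rho_sumv: assumes "x \<in> Ob E" "y \<in> Ob E" "f \<in> Hom E x y" "\<And>i. i \<in> I \<Longrightarrow> v i \<in> M x"
  shows "\<rho> x y f (\<Sum>i\<in>I. v i) = (\<Sum>i\<in>I. \<rho> x y f (v i))"
  by (rule lin_on_sum[OF rho_lin[OF assms(1-3)]]) (use M_0[OF assms(1)] M_add[OF assms(1)] assms(4) in blast)+

lemma rho_expand: assumes x: "x \<in> Ob E" and y: "y \<in> Ob E" and u: "u \<in> Hom E x y" and v: "v \<in> M x"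
  shows "(\<Sum>\<delta>\<in>hbasis E x y. sm (hdual E x y \<delta> u) (\<rho> x y \<delta> v)) = \<rho> x y u v"
proof -
  have "\<rho> x y u v = \<rho> x y (\<Sum>\<delta>\<in>hbasis E x y. hsc E (hdual E x y \<delta> u) \<delta>) v"
    using hdual_expand[OF x y u] by simp
  also have "\<dots> = (\<Sum>\<delta>\<in>hbasis E x y. \<rho> x y (hsc E (hdual E x y \<delta> u) \<delta>) v)"
  proof (rule lin_on_sum[OF rho_linf[OF x y v] hom_0[OF x y] hom_add[OF x y]])
    fix \<delta> assume "\<delta> \<in> hbasis E x y"
    then have "\<delta> \<in> Hom E x y" using hb(1)[OF x y] by blast
    then show "hsc E (hdual E x y \<delta> u) \<delta> \<in> Hom E x y" using hom_scale[OF x y] by blast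
  qed
  also have "\<dots> = (\<Sum>\<delta>\<in>hbasis E x y. sm (hdual E x y \<delta> u) (\<rho> x y \<delta> v))"
  proof (rule sum.cong[OF refl])
    fix \<delta> assume "\<delta> \<in> hbasis E x y"
    then have "\<delta> \<in> Hom E x y" using hb(1)[OF x y] by blast
    then show "\<rho> x y (hsc E (hdual E x y \<delta> u) \<delta>) v = sm (hdual E x y \<delta> u) (\<rho> x y \<delta> v)"
      using lin_on_scale[OF rho_linf[OF x y v]] by blast
  qed
  finally show ?thesis by simp
qed

definition PP :: "('o \<Rightarrow> 'm) set" where
  "PP = {p. (\<forall>x\<in>Ob E. p x \<in> M x) \<and> (\<forall>x. x \<notin> Ob E \<longrightarrow> p x = 0)}"

definition Ly :: "'o \<Rightarrow> 'o set" where
  "Ly y = {a \<in> Ob E. Hom E a y \<noteq> {0}}"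

definition ppi :: "(('o \<Rightarrow> 'o \<Rightarrow> 'h \<Rightarrow> 'k) \<Rightarrow> 'o \<Rightarrow> 'm) \<Rightarrow> 'o \<Rightarrow> 'm" where
  "ppi F = (\<lambda>y. if y \<in> Ob E then (\<Sum>a\<in>Ly y. \<Sum>\<beta>\<in>hbasis E a y. \<rho> a y \<beta> (F (cinj a y (hdual E a y \<beta>)) a)) else 0)"

lemma PP_D: "p \<in> PP \<Longrightarrow> x \<in> Ob E \<Longrightarrow> p x \<in> M x" "p \<in> PP \<Longrightarrow> x \<notin> Ob E \<Longrightarrow> p x = 0"
  unfolding PP_def by blast+

lemma pvs: "vector_space (pscale sm)"
  unfolding vector_space_def pscale_def
  by (simp add: fun_eq_iff W.scale_right_distrib W.scale_left_distrib plus_fun_def)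

lemma PP_sub: "module.subspace (pscale sm) PP"
  unfolding module.subspace_def[OF pvs[unfolded module_iff_vector_space[symmetric]]]
  unfolding PP_def pscale_def
  by (auto simp: M_0 M_add M_scale plus_fun_def)

lemma Ly_finite: "y \<in> Ob E \<Longrightarrow> finite (Ly y)"
  unfolding Ly_def using lower_set_finite by blast

lemma ppi_T: assumes y: "y \<in> Ob E" and T: "finite T" "T \<subseteq> Ob E" "Ly y \<subseteq> T"
  shows "ppi F y = (\<Sum>a\<in>T. \<Sum>\<beta>\<in>hbasis E a y. \<rho> a y \<beta> (F (cinj a y (hdual E a y \<beta>)) a))"
  unfolding ppi_def using y
proof (simp, intro sum.mono_neutral_left[OF T(1) T(3)] ballI)
  fix a assume a: "a \<in> T - Ly y"
  then have "a \<in> Ob E" "Hom E a y = {0}" using T(2) unfolding Ly_def by auto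
  then show "(\<Sum>\<beta>\<in>hbasis E a y. \<rho> a y \<beta> (F (cinj a y (hdual E a y \<beta>)) a)) = 0"
    using hb_empty[OF _ y] by simp
qed

lemma HomC_PP: assumes F: "F \<in> HomC E (pscale sm) PP" and a: "a \<in> Ob E" and y: "y \<in> Ob E"
  shows "F (cinj a y (hdual E a y \<beta>)) a \<in> M a"
  using F hdual_CE[OF a y] a unfolding HomC_def PP_def by blast

lemma ppi_in: assumes F: "F \<in> HomC E (pscale sm) PP" shows "ppi F \<in> PP"
  unfolding PP_def
proof (intro CollectI conjI ballI allI impI)
  fix y assume y: "y \<in> Ob E"
  have "(\<Sum>a\<in>Ly y. \<Sum>\<beta>\<in>hbasis E a y. \<rho> a y \<beta> (F (cinj a y (hdual E a y \<beta>)) a)) \<in> M y"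
  proof (intro M_sum[OF y])
    fix a \<beta> assume a: "a \<in> Ly y" and b: "\<beta> \<in> hbasis E a y"
    have aO: "a \<in> Ob E" using a unfolding Ly_def by blast
    show "\<rho> a y \<beta> (F (cinj a y (hdual E a y \<beta>)) a) \<in> M y"
      using rho_in[OF aO y _ HomC_PP[OF F aO y]] hb(1)[OF aO y] b by blast
  qed
  then show "ppi F y \<in> M y" unfolding ppi_def using y by simp
next
  fix y assume "y \<notin> Ob E" then show "ppi F y = 0" unfolding ppi_def by simp
qed

lemma ppi_lin: "lin_on (fscale (pscale sm)) (pscale sm) (HomC E (pscale sm) PP) ppi"
  unfolding lin_on_def
proof (intro conjI ballI allI)
  fix F G assume F: "F \<in> HomC E (pscale sm) PP" and G: "G \<in> HomC E (pscale sm) PP"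
  show "ppi (F + G) = ppi F + ppi G"
  proof
    fix y
    show "ppi (F + G) y = (ppi F + ppi G) y"
    proof (cases "y \<in> Ob E")
      case y: True
      have "ppi (F + G) y = (\<Sum>a\<in>Ly y. \<Sum>\<beta>\<in>hbasis E a y.
          \<rho> a y \<beta> (F (cinj a y (hdual E a y \<beta>)) a) + \<rho> a y \<beta> (G (cinj a y (hdual E a y \<beta>)) a))"
        unfolding ppi_def using y
      proof (simp, intro sum.cong refl)
        fix a \<beta> assume a: "a \<in> Ly y" and b: "\<beta> \<in> hbasis E a y"
        have aO: "a \<in> Ob E" using a unfolding Ly_def by blast
        have bH: "\<beta> \<in> Hom E a y" using hb(1)[OF aO y] b by blast
        show "\<rho> a y \<beta> (F (cinj a y (hdual E a y \<beta>)) a + G (cinj a y (hdual E a y \<beta>)) a) =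
            \<rho> a y \<beta> (F (cinj a y (hdual E a y \<beta>)) a) + \<rho> a y \<beta> (G (cinj a y (hdual E a y \<beta>)) a)"
          by (rule lin_on_add[OF rho_lin[OF aO y bH] HomC_PP[OF F aO y] HomC_PP[OF G aO y]])
      qed
      also have "\<dots> = ppi F y + ppi G y"
        unfolding ppi_def using y by (simp add: sum.distrib)
      finally show ?thesis by simp
    next
      case False then show ?thesis unfolding ppi_def by simp
    qed
  qed
next
  fix k F assume F: "F \<in> HomC E (pscale sm) PP"
  show "ppi (fscale (pscale sm) k F) = pscale sm k (ppi F)"
  proof
    fix y
    show "ppi (fscale (pscale sm) k F) y = pscale sm k (ppi F) y"
    proof (cases "y \<in> Ob E")
      case y: True
      have "ppi (fscale (pscale sm) k F) y = (\<Sum>a\<in>Ly y. \<Sum>\<beta>\<in>hbasis E a y.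
          sm k (\<rho> a y \<beta> (F (cinj a y (hdual E a y \<beta>)) a)))"
        unfolding ppi_def using y
      proof (simp, intro sum.cong refl)
        fix a \<beta> assume a: "a \<in> Ly y" and b: "\<beta> \<in> hbasis E a y"
        have aO: "a \<in> Ob E" using a unfolding Ly_def by blast
        have bH: "\<beta> \<in> Hom E a y" using hb(1)[OF aO y] b by blast
        show "\<rho> a y \<beta> (fscale (pscale sm) k F (cinj a y (hdual E a y \<beta>)) a) =
            sm k (\<rho> a y \<beta> (F (cinj a y (hdual E a y \<beta>)) a))"
          unfolding fscale_def pscale_def
          by (rule lin_on_scale[OF rho_lin[OF aO y bH] HomC_PP[OF F aO y]])
      qed
      also have "\<dots> = pscale sm k (ppi F) y"
        unfolding ppi_def pscale_def using y by (simp add: W.scale_sum_right)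
      finally show ?thesis by simp
    next
      case False then show ?thesis unfolding ppi_def pscale_def by simp
    qed
  qed
qed

lemma eps_cinj: assumes a: "a \<in> Ob E" and y: "y \<in> Ob E"
  shows "coalg_eps E (cinj a y (hdual E a y \<beta>)) = (if a = y then hdual E a y \<beta> (idm E a) else 0)"
proof -
  have "coalg_eps E (cinj a y (hdual E a y \<beta>)) = (\<Sum>x\<in>{a}. cinj a y (hdual E a y \<beta>) x x (idm E x))"
    unfolding coalg_eps_Dg
    using Dsum_ext[OF hdual_CE[OF a y], where T = "{a}" and g = "\<lambda>k x. k"] Dg_cinj by simp
  then show ?thesis by (simp add: cinj_app)
qed

lemma counit_PP: assumes p: "p \<in> PP"
  shows "ppi (extC E (\<lambda>c. pscale sm (coalg_eps E c) p)) = p"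
proof
  fix y
  show "ppi (extC E (\<lambda>c. pscale sm (coalg_eps E c) p)) y = p y"
  proof (cases "y \<in> Ob E")
    case y: True
    have yL: "y \<in> Ly y" unfolding Ly_def using y id_in[OF y] id_ne[OF y] by blast
    have "ppi (extC E (\<lambda>c. pscale sm (coalg_eps E c) p)) y
       = (\<Sum>a\<in>Ly y. if a = y then (\<Sum>\<beta>\<in>hbasis E y y. \<rho> y y \<beta> (sm (hdual E y y \<beta> (idm E y)) (p y))) else 0)"
      unfolding ppi_def using y
    proof (simp, intro sum.cong refl)
      fix a assume a: "a \<in> Ly y"
      have aO: "a \<in> Ob E" using a unfolding Ly_def by blast
      show "(\<Sum>\<beta>\<in>hbasis E a y. \<rho> a y \<beta> (extC E (\<lambda>c. pscale sm (coalg_eps E c) p) (cinj a y (hdual E a y \<beta>)) a)) =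
         (if a = y then \<Sum>\<beta>\<in>hbasis E y y. \<rho> y y \<beta> (sm (hdual E y y \<beta> (idm E y)) (p y)) else 0)"
      proof (cases "a = y")
        case True
        then show ?thesis unfolding extC_def using hdual_CE[OF y y] eps_cinj[OF y y]
          by (simp add: pscale_def)
      next
        case False
        have "\<rho> a y \<beta> (extC E (\<lambda>c. pscale sm (coalg_eps E c) p) (cinj a y (hdual E a y \<beta>)) a) = 0"
          if b: "\<beta> \<in> hbasis E a y" for \<beta>
        proof -
          have "extC E (\<lambda>c. pscale sm (coalg_eps E c) p) (cinj a y (hdual E a y \<beta>)) a = 0"
            unfolding extC_def using hdual_CE[OF aO y] eps_cinj[OF aO y] False by (simp add: pscale_def)
          then show ?thesis using rho_0v[OF aO y] hb(1)[OF aO y] b by auto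
        qed
        then show ?thesis using False by simp
      qed
    qed
    also have "\<dots> = (\<Sum>\<beta>\<in>hbasis E y y. \<rho> y y \<beta> (sm (hdual E y y \<beta> (idm E y)) (p y)))"
      using Ly_finite[OF y] yL by simp
    also have "\<dots> = (\<Sum>\<beta>\<in>hbasis E y y. sm (hdual E y y \<beta> (idm E y)) (\<rho> y y \<beta> (p y)))"
    proof (rule sum.cong[OF refl])
      fix \<beta> assume "\<beta> \<in> hbasis E y y"
      then have "\<beta> \<in> Hom E y y" using hb(1)[OF y y] by blast
      then show "\<rho> y y \<beta> (sm (hdual E y y \<beta> (idm E y)) (p y)) = sm (hdual E y y \<beta> (idm E y)) (\<rho> y y \<beta> (p y))"
        using lin_on_scale[OF rho_lin[OF y y] PP_D(1)[OF p y]] by blast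
    qed
    also have "\<dots> = \<rho> y y (idm E y) (p y)"
      by (rule rho_expand[OF y y id_in[OF y] PP_D(1)[OF p y]])
    also have "\<dots> = p y" by (rule rho_id[OF y PP_D(1)[OF p y]])
    finally show ?thesis .
  next
    case False
    then show ?thesis unfolding ppi_def using PP_D(2)[OF p False] by simp
  qed
qed

end


context emod begin

lemma S_props: assumes y: "y \<in> Ob E"
  shows "finite {a \<in> Ob E. prec E a y}" "{a \<in> Ob E. prec E a y} \<subseteq> Ob E"
    "Ly y \<subseteq> {a \<in> Ob E. prec E a y}"
    "z \<in> {a \<in> Ob E. prec E a y} \<Longrightarrow> Ly z \<subseteq> {a \<in> Ob E. prec E a y}"
    "mid E w y \<subseteq> {a \<in> Ob E. prec E a y}"
proof -
  have "finite {x. prec E x y}" using lwf y unfolding lower_finite_def by blast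
  then show "finite {a \<in> Ob E. prec E a y}" by (rule finite_subset[rotated]) blast
  show "{a \<in> Ob E. prec E a y} \<subseteq> Ob E" by blast
  show "Ly y \<subseteq> {a \<in> Ob E. prec E a y}" unfolding Ly_def using prec_I y by blast
  show "mid E w y \<subseteq> {a \<in> Ob E. prec E a y}" unfolding mid_def using prec_I y by blast
  assume z: "z \<in> {a \<in> Ob E. prec E a y}"
  show "Ly z \<subseteq> {a \<in> Ob E. prec E a y}"
  proof
    fix a assume "a \<in> Ly z"
    then have a: "a \<in> Ob E" "prec E a z" unfolding Ly_def using prec_I z by auto
    then show "a \<in> {a \<in> Ob E. prec E a y}" using z unfolding prec_def by auto
  qed
qed

lemma csupp_cinj: assumes w: "w \<in> Ob E" and y: "y \<in> Ob E" and d: "\<delta> \<in> hbasis E w y"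
  shows "csupp E (cinj w y (hdual E w y \<delta>)) = {(w, y)}"
proof -
  have "hdual E w y \<delta> \<delta> = 1" using hdual_basis[OF w y d d] by simp
  then have "hdual E w y \<delta> \<noteq> (\<lambda>_. 0)" by (metis one_neq_zero)
  then show ?thesis unfolding csupp_def cinj_def using w y by auto
qed

lemma cassoc_PP:
  assumes f_in: "\<forall>c\<in>CE E. f c \<in> HomC E (pscale sm) PP"
  shows "ppi (extC E (\<lambda>c. ppi (f c))) = ppi (extC E (comult_comp E (pscale sm) f))"
proof
  fix y
  show "ppi (extC E (\<lambda>c. ppi (f c))) y = ppi (extC E (comult_comp E (pscale sm) f)) y"
  proof (cases "y \<in> Ob E")
    case False then show ?thesis unfolding ppi_def by simp
  next
    case y: True
    define S where "S = {a \<in> Ob E. prec E a y}"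
    note SP = S_props[OF y, folded S_def]
    have SO: "z \<in> S \<Longrightarrow> z \<in> Ob E" for z using SP(2) by (rule subsetD)
    define X where "X z \<beta> w \<gamma> = f (cinj z y (hdual E z y \<beta>)) (cinj w z (hdual E w z \<gamma>)) w" for z \<beta> w \<gamma>
    have Xin: "X z \<beta> w \<gamma> \<in> M w" if "z \<in> Ob E" "w \<in> Ob E" for z \<beta> w \<gamma>
    proof -
      have "f (cinj z y (hdual E z y \<beta>)) \<in> HomC E (pscale sm) PP" by (rule bspec[OF f_in hdual_CE[OF that(1) y]])
      then show ?thesis unfolding X_def by (rule HomC_PP[OF _ that(2,1)])
    qed
    have bH: "b \<in> Hom E a c" if "a \<in> Ob E" "c \<in> Ob E" "b \<in> hbasis E a c" for a b c
      by (rule subsetD[OF hb(1)[OF that(1,2)] that(3)])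
    define t where "t z \<beta> w \<gamma> = \<rho> z y \<beta> (\<rho> w z \<gamma> (X z \<beta> w \<gamma>))" for z \<beta> w \<gamma>
    have "ppi (extC E (\<lambda>c. ppi (f c))) y
        = (\<Sum>z\<in>S. \<Sum>\<beta>\<in>hbasis E z y. \<rho> z y \<beta> (extC E (\<lambda>c. ppi (f c)) (cinj z y (hdual E z y \<beta>)) z))"
      by (rule ppi_T[OF y SP(1,2,3)])
    also have "\<dots> = (\<Sum>z\<in>S. \<Sum>\<beta>\<in>hbasis E z y. \<Sum>w\<in>S. \<Sum>\<gamma>\<in>hbasis E w z. t z \<beta> w \<gamma>)"
    proof (intro sum.cong refl)
      fix z \<beta> assume z: "z \<in> S" and b: "\<beta> \<in> hbasis E z y"
      have zO: "z \<in> Ob E" using SO[OF z] .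
      have "extC E (\<lambda>c. ppi (f c)) (cinj z y (hdual E z y \<beta>)) z = ppi (f (cinj z y (hdual E z y \<beta>))) z"
        unfolding extC_def using hdual_CE[OF zO y] by simp
      also have "\<dots> = (\<Sum>w\<in>S. \<Sum>\<gamma>\<in>hbasis E w z. \<rho> w z \<gamma> (X z \<beta> w \<gamma>))"
        unfolding X_def by (rule ppi_T[OF zO SP(1,2) SP(4)[OF z]])
      finally have e: "extC E (\<lambda>c. ppi (f c)) (cinj z y (hdual E z y \<beta>)) z = (\<Sum>w\<in>S. \<Sum>\<gamma>\<in>hbasis E w z. \<rho> w z \<gamma> (X z \<beta> w \<gamma>))" .
      have inz: "\<rho> w z \<gamma> (X z \<beta> w \<gamma>) \<in> M z" if "w \<in> S" "\<gamma> \<in> hbasis E w z" for w \<gamma>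
        using rho_in[OF SO[OF that(1)] zO bH[OF SO[OF that(1)] zO that(2)] Xin[OF zO SO[OF that(1)]]] .
      have "\<rho> z y \<beta> (\<Sum>w\<in>S. \<Sum>\<gamma>\<in>hbasis E w z. \<rho> w z \<gamma> (X z \<beta> w \<gamma>))
          = (\<Sum>w\<in>S. \<rho> z y \<beta> (\<Sum>\<gamma>\<in>hbasis E w z. \<rho> w z \<gamma> (X z \<beta> w \<gamma>)))"
        by (rule rho_sumv[OF zO y bH[OF zO y b]]) (use inz in \<open>blast intro: M_sum[OF zO]\<close>)
      also have "\<dots> = (\<Sum>w\<in>S. \<Sum>\<gamma>\<in>hbasis E w z. t z \<beta> w \<gamma>)"
        unfolding t_def
        by (intro sum.cong refl rho_sumv[OF zO y bH[OF zO y b]]) (use inz in blast)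
      finally show "\<rho> z y \<beta> (extC E (\<lambda>c. ppi (f c)) (cinj z y (hdual E z y \<beta>)) z)
          = (\<Sum>w\<in>S. \<Sum>\<gamma>\<in>hbasis E w z. t z \<beta> w \<gamma>)" unfolding e .
    qed
    also have "\<dots> = (\<Sum>z\<in>S. \<Sum>w\<in>S. \<Sum>\<beta>\<in>hbasis E z y. \<Sum>\<gamma>\<in>hbasis E w z. t z \<beta> w \<gamma>)"
      by (rule sum.cong[OF refl]) (rule sum.swap)
    also have "\<dots> = (\<Sum>z\<in>S. \<Sum>w\<in>S. \<Sum>\<gamma>\<in>hbasis E w z. \<Sum>\<beta>\<in>hbasis E z y. t z \<beta> w \<gamma>)"
      by (rule sum.cong[OF refl], rule sum.cong[OF refl]) (rule sum.swap)
    also have "\<dots> = (\<Sum>w\<in>S. \<Sum>z\<in>S. \<Sum>\<gamma>\<in>hbasis E w z. \<Sum>\<beta>\<in>hbasis E z y. t z \<beta> w \<gamma>)"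
      by (rule sum.swap)
    finally have LHS: "ppi (extC E (\<lambda>c. ppi (f c))) y = (\<Sum>w\<in>S. \<Sum>z\<in>S. \<Sum>\<gamma>\<in>hbasis E w z. \<Sum>\<beta>\<in>hbasis E z y. t z \<beta> w \<gamma>)" .
    have comw: "comult_comp E (pscale sm) f (cinj w y (hdual E w y \<delta>)) w
        = (\<Sum>m\<in>S. \<Sum>b\<in>hbasis E w m. \<Sum>b'\<in>hbasis E m y. sm (hdual E w y \<delta> (cmp E w m y b b')) (X m b' w b))"
      if w: "w \<in> S" and d: "\<delta> \<in> hbasis E w y" for w \<delta>
    proof -
      have wO: "w \<in> Ob E" using SO[OF w] .
      have "comult_comp E (pscale sm) f (cinj w y (hdual E w y \<delta>))
         = (\<Sum>m\<in>mid E w y. \<Sum>b\<in>hbasis E w m. \<Sum>b'\<in>hbasis E m y.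
              pscale sm (hdual E w y \<delta> (cmp E w m y b b')) (f (cinj m y (hdual E m y b')) (cinj w m (hdual E w m b))))"
        unfolding comult_comp_def csupp_cinj[OF wO y d] by (simp add: cinj_app)
      then have "comult_comp E (pscale sm) f (cinj w y (hdual E w y \<delta>)) w
         = (\<Sum>m\<in>mid E w y. \<Sum>b\<in>hbasis E w m. \<Sum>b'\<in>hbasis E m y. sm (hdual E w y \<delta> (cmp E w m y b b')) (X m b' w b))"
        by (simp add: sum_app pscale_def X_def)
      also have "\<dots> = (\<Sum>m\<in>S. \<Sum>b\<in>hbasis E w m. \<Sum>b'\<in>hbasis E m y. sm (hdual E w y \<delta> (cmp E w m y b b')) (X m b' w b))"
      proof (rule sum.mono_neutral_left[OF SP(1) SP(5)], rule ballI)
        fix m assume m: "m \<in> S - mid E w y"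
        then have mO: "m \<in> Ob E" using SO by blast
        have "m \<notin> mid E w y" using m by blast
        then have "Hom E w m = {0} \<or> Hom E m y = {0}" using mO by (simp add: mid_iff)
        then have "hbasis E w m = {} \<or> hbasis E m y = {}" using hb_empty[OF wO mO] hb_empty[OF mO y] by blast
        then show "(\<Sum>b\<in>hbasis E w m. \<Sum>b'\<in>hbasis E m y. sm (hdual E w y \<delta> (cmp E w m y b b')) (X m b' w b)) = 0"
          by (elim disjE) simp_all
      qed
      finally show ?thesis .
    qed
    have "ppi (extC E (comult_comp E (pscale sm) f)) y
        = (\<Sum>w\<in>S. \<Sum>\<delta>\<in>hbasis E w y. \<rho> w y \<delta> (extC E (comult_comp E (pscale sm) f) (cinj w y (hdual E w y \<delta>)) w))"
      by (rule ppi_T[OF y SP(1,2,3)])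
    also have "\<dots> = (\<Sum>w\<in>S. \<Sum>\<delta>\<in>hbasis E w y. \<Sum>m\<in>S. \<Sum>b\<in>hbasis E w m. \<Sum>b'\<in>hbasis E m y.
          sm (hdual E w y \<delta> (cmp E w m y b b')) (\<rho> w y \<delta> (X m b' w b)))"
    proof (intro sum.cong refl)
      fix w \<delta> assume w: "w \<in> S" and d: "\<delta> \<in> hbasis E w y"
      have wO: "w \<in> Ob E" using SO[OF w] .
      have dH: "\<delta> \<in> Hom E w y" using bH[OF wO y d] .
      have inw: "sm k (X m b' w b) \<in> M w" if "m \<in> S" for m b' b k
        using M_scale[OF wO Xin[OF SO[OF that] wO]] .
      have e0: "extC E (comult_comp E (pscale sm) f) (cinj w y (hdual E w y \<delta>)) w
          = (\<Sum>m\<in>S. \<Sum>b\<in>hbasis E w m. \<Sum>b'\<in>hbasis E m y. sm (hdual E w y \<delta> (cmp E w m y b b')) (X m b' w b))"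
        unfolding extC_def using hdual_CE[OF wO y, of \<delta>] comw[OF w d] by (simp only: if_True)
      have "\<rho> w y \<delta> (extC E (comult_comp E (pscale sm) f) (cinj w y (hdual E w y \<delta>)) w)
          = \<rho> w y \<delta> (\<Sum>m\<in>S. \<Sum>b\<in>hbasis E w m. \<Sum>b'\<in>hbasis E m y. sm (hdual E w y \<delta> (cmp E w m y b b')) (X m b' w b))"
        unfolding e0 ..
      also have "\<dots> = (\<Sum>m\<in>S. \<Sum>b\<in>hbasis E w m. \<Sum>b'\<in>hbasis E m y.
           \<rho> w y \<delta> (sm (hdual E w y \<delta> (cmp E w m y b b')) (X m b' w b)))"
      proof -
        have in3: "(\<Sum>b'\<in>hbasis E m y. sm (hdual E w y \<delta> (cmp E w m y b b')) (X m b' w b)) \<in> M w"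
          if "m \<in> S" for m b
          by (rule M_sum[OF wO]) (rule inw[OF that])
        have in2: "(\<Sum>b\<in>hbasis E w m. \<Sum>b'\<in>hbasis E m y. sm (hdual E w y \<delta> (cmp E w m y b b')) (X m b' w b)) \<in> M w"
          if "m \<in> S" for m
          by (rule M_sum[OF wO]) (rule in3[OF that])
        have "\<rho> w y \<delta> (\<Sum>m\<in>S. \<Sum>b\<in>hbasis E w m. \<Sum>b'\<in>hbasis E m y. sm (hdual E w y \<delta> (cmp E w m y b b')) (X m b' w b))
          = (\<Sum>m\<in>S. \<rho> w y \<delta> (\<Sum>b\<in>hbasis E w m. \<Sum>b'\<in>hbasis E m y. sm (hdual E w y \<delta> (cmp E w m y b b')) (X m b' w b)))"
          by (rule rho_sumv[OF wO y dH]) (rule in2)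
        also have "\<dots> = (\<Sum>m\<in>S. \<Sum>b\<in>hbasis E w m. \<rho> w y \<delta> (\<Sum>b'\<in>hbasis E m y. sm (hdual E w y \<delta> (cmp E w m y b b')) (X m b' w b)))"
        proof (rule sum.cong[OF refl])
          fix m assume m: "m \<in> S"
          show "\<rho> w y \<delta> (\<Sum>b\<in>hbasis E w m. \<Sum>b'\<in>hbasis E m y. sm (hdual E w y \<delta> (cmp E w m y b b')) (X m b' w b))
            = (\<Sum>b\<in>hbasis E w m. \<rho> w y \<delta> (\<Sum>b'\<in>hbasis E m y. sm (hdual E w y \<delta> (cmp E w m y b b')) (X m b' w b)))"
            by (rule rho_sumv[OF wO y dH]) (rule in3[OF m])
        qed
        also have "\<dots> = (\<Sum>m\<in>S. \<Sum>b\<in>hbasis E w m. \<Sum>b'\<in>hbasis E m y. \<rho> w y \<delta> (sm (hdual E w y \<delta> (cmp E w m y b b')) (X m b' w b)))"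
        proof (rule sum.cong[OF refl], rule sum.cong[OF refl])
          fix m b assume m: "m \<in> S"
          show "\<rho> w y \<delta> (\<Sum>b'\<in>hbasis E m y. sm (hdual E w y \<delta> (cmp E w m y b b')) (X m b' w b))
            = (\<Sum>b'\<in>hbasis E m y. \<rho> w y \<delta> (sm (hdual E w y \<delta> (cmp E w m y b b')) (X m b' w b)))"
            by (rule rho_sumv[OF wO y dH]) (rule inw[OF m])
        qed
        finally show ?thesis .
      qed
      also have "\<dots> = (\<Sum>m\<in>S. \<Sum>b\<in>hbasis E w m. \<Sum>b'\<in>hbasis E m y.
          sm (hdual E w y \<delta> (cmp E w m y b b')) (\<rho> w y \<delta> (X m b' w b)))"
      proof (rule sum.cong[OF refl], rule sum.cong[OF refl], rule sum.cong[OF refl])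
        fix m b b' assume m: "m \<in> S"
        show "\<rho> w y \<delta> (sm (hdual E w y \<delta> (cmp E w m y b b')) (X m b' w b)) =
            sm (hdual E w y \<delta> (cmp E w m y b b')) (\<rho> w y \<delta> (X m b' w b))"
          by (rule lin_on_scale[OF rho_lin[OF wO y dH] Xin[OF SO[OF m] wO]])
      qed
      finally show "\<rho> w y \<delta> (extC E (comult_comp E (pscale sm) f) (cinj w y (hdual E w y \<delta>)) w)
          = (\<Sum>m\<in>S. \<Sum>b\<in>hbasis E w m. \<Sum>b'\<in>hbasis E m y.
          sm (hdual E w y \<delta> (cmp E w m y b b')) (\<rho> w y \<delta> (X m b' w b)))" .
    qed
    also have "\<dots> = (\<Sum>w\<in>S. \<Sum>m\<in>S. \<Sum>b\<in>hbasis E w m. \<Sum>b'\<in>hbasis E m y. \<Sum>\<delta>\<in>hbasis E w y.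
          sm (hdual E w y \<delta> (cmp E w m y b b')) (\<rho> w y \<delta> (X m b' w b)))"
      apply (rule sum.cong[OF refl])
      apply (rule trans[OF sum.swap])
      apply (rule sum.cong[OF refl])
      apply (rule trans[OF sum.swap])
      apply (rule sum.cong[OF refl])
      apply (rule sum.swap)
      done
    also have "\<dots> = (\<Sum>w\<in>S. \<Sum>m\<in>S. \<Sum>b\<in>hbasis E w m. \<Sum>b'\<in>hbasis E m y. t m b' w b)"
    proof (intro sum.cong refl)
      fix w m b b' assume w: "w \<in> S" and m: "m \<in> S" and b: "b \<in> hbasis E w m" and b': "b' \<in> hbasis E m y"
      have wO: "w \<in> Ob E" and mO: "m \<in> Ob E" using SO w m by auto
      have bH': "b \<in> Hom E w m" "b' \<in> Hom E m y" using bH[OF wO mO b] bH[OF mO y b'] by auto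
      have "(\<Sum>\<delta>\<in>hbasis E w y. sm (hdual E w y \<delta> (cmp E w m y b b')) (\<rho> w y \<delta> (X m b' w b)))
          = \<rho> w y (cmp E w m y b b') (X m b' w b)"
        by (rule rho_expand[OF wO y cmp_in[OF wO mO y bH'] Xin[OF mO wO]])
      also have "\<dots> = t m b' w b"
        unfolding t_def by (rule rho_comp[OF wO mO y bH' Xin[OF mO wO]])
      finally show "(\<Sum>\<delta>\<in>hbasis E w y. sm (hdual E w y \<delta> (cmp E w m y b b')) (\<rho> w y \<delta> (X m b' w b))) = t m b' w b" .
    qed
    finally show ?thesis using LHS by simp
  qed
qed

end


context emod begin

lemma is_contra_PP: "is_contra E (pscale sm) PP ppi"
  unfolding is_contra_def
  using pvs PP_sub ppi_in ppi_lin counit_PP cassoc_PP by blast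

definition dl :: "'o \<Rightarrow> 'm \<Rightarrow> 'o \<Rightarrow> 'm" where
  "dl x v = (\<lambda>z. if z = x then v else 0)"

lemma dl_PP: "x \<in> Ob E \<Longrightarrow> v \<in> M x \<Longrightarrow> dl x v \<in> PP"
  unfolding PP_def dl_def using M_0 by auto

lemma cact_ev_conc:
  assumes x: "x \<in> Ob E" and y: "y \<in> Ob E" and f: "f \<in> Hom E x y" and p: "p \<in> PP"
  shows "cact E (pscale sm) ppi (ev_fun x y f) p = dl y (\<rho> x y f (p x))"
proof
  fix z
  show "cact E (pscale sm) ppi (ev_fun x y f) p z = dl y (\<rho> x y f (p x)) z"
  proof (cases "z \<in> Ob E")
    case False
    then have "z \<noteq> y" using y by blast
    then show ?thesis using False unfolding cact_def ppi_def dl_def by simp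
  next
    case z: True
    define T where "T = insert x (Ly z)"
    have T: "finite T" "T \<subseteq> Ob E" "Ly z \<subseteq> T" unfolding T_def using Ly_finite[OF z] x
      by (auto simp: Ly_def)
    have "cact E (pscale sm) ppi (ev_fun x y f) p z
       = (\<Sum>a\<in>T. \<Sum>\<beta>\<in>hbasis E a z. \<rho> a z \<beta> (extC E (\<lambda>c. pscale sm (ev_fun x y f c) p) (cinj a z (hdual E a z \<beta>)) a))"
      unfolding cact_def by (rule ppi_T[OF z T])
    also have "\<dots> = (\<Sum>a\<in>T. if a = x then (if z = y then \<rho> x y f (p x) else 0) else 0)"
    proof (rule sum.cong[OF refl])
      fix a assume a: "a \<in> T"
      have aO: "a \<in> Ob E" using a T(2) by blast
      have ev: "extC E (\<lambda>c. pscale sm (ev_fun x y f c) p) (cinj a z (hdual E a z \<beta>)) a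
          = sm (if a = x \<and> z = y then hdual E a z \<beta> f else 0) (p a)" for \<beta>
      proof -
        have "cinj a z (hdual E a z \<beta>) \<in> CE E" by (rule hdual_CE[OF aO z])
        then show ?thesis unfolding extC_def pscale_def by (simp add: ev_cinj)
      qed
      show "(\<Sum>\<beta>\<in>hbasis E a z. \<rho> a z \<beta> (extC E (\<lambda>c. pscale sm (ev_fun x y f c) p) (cinj a z (hdual E a z \<beta>)) a))
         = (if a = x then (if z = y then \<rho> x y f (p x) else 0) else 0)"
      proof (cases "a = x \<and> z = y")
        case True
        then have ax: "a = x" and zy: "z = y" by auto
        have "(\<Sum>\<beta>\<in>hbasis E a z. \<rho> a z \<beta> (extC E (\<lambda>c. pscale sm (ev_fun x y f c) p) (cinj a z (hdual E a z \<beta>)) a))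
            = (\<Sum>\<beta>\<in>hbasis E x y. \<rho> x y \<beta> (sm (hdual E x y \<beta> f) (p x)))"
          unfolding ev using ax zy by simp
        also have "\<dots> = (\<Sum>\<beta>\<in>hbasis E x y. sm (hdual E x y \<beta> f) (\<rho> x y \<beta> (p x)))"
        proof (rule sum.cong[OF refl])
          fix \<beta> assume "\<beta> \<in> hbasis E x y"
          then have "\<beta> \<in> Hom E x y" using hb(1)[OF x y] by blast
          then show "\<rho> x y \<beta> (sm (hdual E x y \<beta> f) (p x)) = sm (hdual E x y \<beta> f) (\<rho> x y \<beta> (p x))"
            by (rule lin_on_scale[OF rho_lin[OF x y] PP_D(1)[OF p x]])
        qed
        also have "\<dots> = \<rho> x y f (p x)" by (rule rho_expand[OF x y f PP_D(1)[OF p x]])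
        finally show ?thesis using ax zy by simp
      next
        case False
        then have nc: "(a = x \<and> z = y) = False" by simp
        have "\<rho> a z \<beta> (extC E (\<lambda>c. pscale sm (ev_fun x y f c) p) (cinj a z (hdual E a z \<beta>)) a) = 0"
          if b: "\<beta> \<in> hbasis E a z" for \<beta>
        proof -
          have "\<beta> \<in> Hom E a z" using hb(1)[OF aO z] b by blast
          then show ?thesis unfolding ev nc if_False W.scale_zero_left by (rule rho_0v[OF aO z])
        qed
        then have "(\<Sum>\<beta>\<in>hbasis E a z. \<rho> a z \<beta> (extC E (\<lambda>c. pscale sm (ev_fun x y f c) p) (cinj a z (hdual E a z \<beta>)) a)) = 0"
          by simp
        then show ?thesis using False by auto
      qed
    qed
    also have "\<dots> = (if z = y then \<rho> x y f (p x) else 0)"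
      using T(1) unfolding T_def by simp
    finally show ?thesis unfolding dl_def .
  qed
qed

interpretation PC: contra E "pscale sm" PP ppi
  by unfold_locales (rule is_contra_PP)

lemma theta_char: assumes x: "x \<in> Ob E"
  shows "w \<in> Theta_obj E (pscale sm) PP ppi x \<longleftrightarrow> (\<exists>v\<in>M x. w = dl x v)"
proof -
  have e: "cact E (pscale sm) ppi (e_fun E x) p = dl x (p x)" if p: "p \<in> PP" for p
    using cact_ev_conc[OF x x id_in[OF x] p] rho_id[OF x PP_D(1)[OF p x]] unfolding e_is_ev by simp
  show ?thesis
  proof
    assume "w \<in> Theta_obj E (pscale sm) PP ppi x"
    then obtain p where "p \<in> PP" "w = cact E (pscale sm) ppi (e_fun E x) p" unfolding PC.Theta_mem by blast
    then show "\<exists>v\<in>M x. w = dl x v" using e PP_D(1)[OF _ x] by blast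
  next
    assume "\<exists>v\<in>M x. w = dl x v"
    then obtain v where v: "v \<in> M x" "w = dl x v" by blast
    have "w = cact E (pscale sm) ppi (e_fun E x) (dl x v)" using e[OF dl_PP[OF x v(1)]] v(2) by (simp add: dl_def)
    then show "w \<in> Theta_obj E (pscale sm) PP ppi x" unfolding PC.Theta_mem using dl_PP[OF x v(1)] by blast
  qed
qed

lemma act_dl: assumes x: "x \<in> Ob E" and y: "y \<in> Ob E" and f: "f \<in> Hom E x y" and v: "v \<in> M x"
  shows "Theta_act E (pscale sm) ppi x y f (dl x v) = dl y (\<rho> x y f v)"
  unfolding Theta_act_def using cact_ev_conc[OF x y f dl_PP[OF x v]] by (simp add: dl_def)

lemma iso: "Emod_iso E (pscale sm) (Theta_obj E (pscale sm) PP ppi) (Theta_act E (pscale sm) ppi) sm M \<rho>"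
  unfolding Emod_iso_def
proof (intro exI conjI)
  show "Emod_hom E (pscale sm) (Theta_obj E (pscale sm) PP ppi) (Theta_act E (pscale sm) ppi) sm M \<rho> (\<lambda>x w. w x)"
    unfolding Emod_hom_def
  proof (intro conjI ballI)
    fix x assume x: "x \<in> Ob E"
    show "lin_on (pscale sm) sm (Theta_obj E (pscale sm) PP ppi x) (\<lambda>w. w x)"
      unfolding lin_on_def pscale_def by simp
    show "(\<lambda>w. w x) ` Theta_obj E (pscale sm) PP ppi x \<subseteq> M x"
      using theta_char[OF x] by (auto simp: dl_def)
  next
    fix x y f w assume x: "x \<in> Ob E" and y: "y \<in> Ob E" and f: "f \<in> Hom E x y"
      and w: "w \<in> Theta_obj E (pscale sm) PP ppi x"
    obtain v where v: "v \<in> M x" "w = dl x v" using w theta_char[OF x] by blast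
    show "Theta_act E (pscale sm) ppi x y f w y = \<rho> x y f (w x)"
      using act_dl[OF x y f v(1)] v(2) by (simp add: dl_def)
  qed
  show "Emod_hom E sm M \<rho> (pscale sm) (Theta_obj E (pscale sm) PP ppi) (Theta_act E (pscale sm) ppi) dl"
    unfolding Emod_hom_def
  proof (intro conjI ballI)
    fix x assume x: "x \<in> Ob E"
    show "lin_on sm (pscale sm) (M x) (dl x)"
      unfolding lin_on_def pscale_def dl_def by (auto simp: fun_eq_iff)
    show "dl x ` M x \<subseteq> Theta_obj E (pscale sm) PP ppi x"
      using theta_char[OF x] by blast
  next
    fix x y f v assume x: "x \<in> Ob E" and y: "y \<in> Ob E" and f: "f \<in> Hom E x y" and v: "v \<in> M x"
    show "dl y (\<rho> x y f v) = Theta_act E (pscale sm) ppi x y f (dl x v)"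
      using act_dl[OF x y f v] by simp
  qed
  show "\<forall>x\<in>Ob E. (\<forall>v\<in>Theta_obj E (pscale sm) PP ppi x. dl x (v x) = v) \<and> (\<forall>w\<in>M x. dl x w x = w)"
  proof (intro ballI conjI)
    fix x v assume x: "x \<in> Ob E" and v: "v \<in> Theta_obj E (pscale sm) PP ppi x"
    obtain u where "u \<in> M x" "v = dl x u" using v theta_char[OF x] by blast
    then show "dl x (v x) = v" by (simp add: dl_def)
  next
    fix x w show "dl x w x = w" by (simp add: dl_def)
  qed
qed

end

lemma part5:
  fixes E :: "('o, 'h::ab_group_add, 'k::field) klcat" and sm :: "'k \<Rightarrow> 'm::ab_group_add \<Rightarrow> 'm"
  assumes "lkc E" and "is_Emod E sm M \<rho>"
  shows "\<exists>(P :: ('o \<Rightarrow> 'm) set) \<pi>. is_contra E (pscale sm) P \<pi> \<and>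
           Emod_iso E (pscale sm) (Theta_obj E (pscale sm) P \<pi>) (Theta_act E (pscale sm) \<pi>) sm M \<rho>"
proof -
  interpret emod E sm M \<rho> using assms by (simp add: emod_def emod_axioms_def)
  show ?thesis using is_contra_PP iso by blast
qed


theorem proposition7p5:
  fixes E :: "('o, 'h::ab_group_add, 'k::field) klcat"
  assumes "klinear_cat E" and "lower_finite E"
  shows
    \<comment> \<open>Theta_E is a functor from contramodules to E-modules\<close>
    "(\<forall>(sp :: 'k \<Rightarrow> 'p::ab_group_add \<Rightarrow> 'p) P \<pi>. is_contra E sp P \<pi> \<longrightarrow>
        is_Emod E sp (Theta_obj E sp P \<pi>) (Theta_act E sp \<pi>)) \<and>
     (\<forall>(sp :: 'k \<Rightarrow> 'p \<Rightarrow> 'p) P \<pi> (sq :: 'k \<Rightarrow> 'q::ab_group_add \<Rightarrow> 'q) Q \<pi>' g.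
        is_contra E sp P \<pi> \<and> is_contra E sq Q \<pi>' \<and> contra_hom E sp P \<pi> sq Q \<pi>' g \<longrightarrow>
        Emod_hom E sp (Theta_obj E sp P \<pi>) (Theta_act E sp \<pi>)
                   sq (Theta_obj E sq Q \<pi>') (Theta_act E sq \<pi>') (\<lambda>x. g)) \<and>
     \<comment> \<open>faithful\<close>
     (\<forall>(sp :: 'k \<Rightarrow> 'p \<Rightarrow> 'p) P \<pi> (sq :: 'k \<Rightarrow> 'q \<Rightarrow> 'q) Q \<pi>' g g'.
        is_contra E sp P \<pi> \<and> is_contra E sq Q \<pi>' \<and>
        contra_hom E sp P \<pi> sq Q \<pi>' g \<and> contra_hom E sp P \<pi> sq Q \<pi>' g' \<and>
        (\<forall>x\<in>Ob E. \<forall>p\<in>Theta_obj E sp P \<pi> x. g p = g' p) \<longrightarrow> (\<forall>p\<in>P. g p = g' p)) \<and>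
     \<comment> \<open>full\<close>
     (\<forall>(sp :: 'k \<Rightarrow> 'p \<Rightarrow> 'p) P \<pi> (sq :: 'k \<Rightarrow> 'q \<Rightarrow> 'q) Q \<pi>' \<eta>.
        is_contra E sp P \<pi> \<and> is_contra E sq Q \<pi>' \<and>
        Emod_hom E sp (Theta_obj E sp P \<pi>) (Theta_act E sp \<pi>)
                   sq (Theta_obj E sq Q \<pi>') (Theta_act E sq \<pi>') \<eta> \<longrightarrow>
        (\<exists>g. contra_hom E sp P \<pi> sq Q \<pi>' g \<and>
             (\<forall>x\<in>Ob E. \<forall>p\<in>Theta_obj E sp P \<pi> x. g p = \<eta> x p))) \<and>
     \<comment> \<open>essentially surjective\<close>
     (\<forall>(sm :: 'k \<Rightarrow> 'm::ab_group_add \<Rightarrow> 'm) M \<rho>. is_Emod E sm M \<rho> \<longrightarrow>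
        (\<exists>(P :: ('o \<Rightarrow> 'm) set) \<pi>. is_contra E (pscale sm) P \<pi> \<and>
           Emod_iso E (pscale sm) (Theta_obj E (pscale sm) P \<pi>) (Theta_act E (pscale sm) \<pi>) sm M \<rho>))"
proof -
  have L: "lkc E" using assms by (simp add: lkc_def)
  have c: "contra E sp P \<pi>" if "is_contra E sp P \<pi>" for sp :: "'k \<Rightarrow> 'r::ab_group_add \<Rightarrow> 'r" and P \<pi>
    using L that by (simp add: contra_def contra_axioms_def)
  have p1: "\<forall>(sp :: 'k \<Rightarrow> 'p::ab_group_add \<Rightarrow> 'p) P \<pi>. is_contra E sp P \<pi> \<longrightarrow>
        is_Emod E sp (Theta_obj E sp P \<pi>) (Theta_act E sp \<pi>)"
  proof (intro allI impI)
    fix sp :: "'k \<Rightarrow> 'p::ab_group_add \<Rightarrow> 'p" and P \<pi> assume "is_contra E sp P \<pi>"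
    then show "is_Emod E sp (Theta_obj E sp P \<pi>) (Theta_act E sp \<pi>)"
      by (rule contra.is_Emod_Theta[OF c])
  qed
  have p2: "\<forall>(sp :: 'k \<Rightarrow> 'p \<Rightarrow> 'p) P \<pi> (sq :: 'k \<Rightarrow> 'q::ab_group_add \<Rightarrow> 'q) Q \<pi>' g.
        is_contra E sp P \<pi> \<and> is_contra E sq Q \<pi>' \<and> contra_hom E sp P \<pi> sq Q \<pi>' g \<longrightarrow>
        Emod_hom E sp (Theta_obj E sp P \<pi>) (Theta_act E sp \<pi>)
                   sq (Theta_obj E sq Q \<pi>') (Theta_act E sq \<pi>') (\<lambda>x. g)"
    using part2[OF c c] by blast
  have p3: "\<forall>(sp :: 'k \<Rightarrow> 'p \<Rightarrow> 'p) P \<pi> (sq :: 'k \<Rightarrow> 'q \<Rightarrow> 'q) Q \<pi>' g g'.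
        is_contra E sp P \<pi> \<and> is_contra E sq Q \<pi>' \<and>
        contra_hom E sp P \<pi> sq Q \<pi>' g \<and> contra_hom E sp P \<pi> sq Q \<pi>' g' \<and>
        (\<forall>x\<in>Ob E. \<forall>p\<in>Theta_obj E sp P \<pi> x. g p = g' p) \<longrightarrow> (\<forall>p\<in>P. g p = g' p)"
    using part3[OF c c] by blast
  have p4: "\<forall>(sp :: 'k \<Rightarrow> 'p \<Rightarrow> 'p) P \<pi> (sq :: 'k \<Rightarrow> 'q \<Rightarrow> 'q) Q \<pi>' \<eta>.
        is_contra E sp P \<pi> \<and> is_contra E sq Q \<pi>' \<and>
        Emod_hom E sp (Theta_obj E sp P \<pi>) (Theta_act E sp \<pi>)
                   sq (Theta_obj E sq Q \<pi>') (Theta_act E sq \<pi>') \<eta> \<longrightarrow>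
        (\<exists>g. contra_hom E sp P \<pi> sq Q \<pi>' g \<and>
             (\<forall>x\<in>Ob E. \<forall>p\<in>Theta_obj E sp P \<pi> x. g p = \<eta> x p))"
    using part4[OF c c] by blast
  have p5: "\<forall>(sm :: 'k \<Rightarrow> 'm::ab_group_add \<Rightarrow> 'm) M \<rho>. is_Emod E sm M \<rho> \<longrightarrow>
        (\<exists>(P :: ('o \<Rightarrow> 'm) set) \<pi>. is_contra E (pscale sm) P \<pi> \<and>
           Emod_iso E (pscale sm) (Theta_obj E (pscale sm) P \<pi>) (Theta_act E (pscale sm) \<pi>) sm M \<rho>)"
    using part5[OF L] by blast
  show ?thesis using p1 p2 p3 p4 p5 by blast
qed


end
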